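(* Let $\sigma>0$, $\bar\gamma>0$, $c_\infty\ge0$, and for $\gamma\in(0,\bar\gamma]$ let $\tau_\gamma:[0,\infty)\to[0,\infty)$ be non-decreasing with $\tau_\gamma(0)=0$, such that there exist $R_1,L\ge0$, $m>0$ with $\sup_{r>0}\tau_\gamma(r)/r\le1+\gamma L$ and $\sup_{r>R_1}\tau_\gamma(r)/r\le1-\gamma m$ for all $\gamma\in(0,\bar\gamma]$. Let $Q_\gamma$ be the Markov kernel on $[0,\infty)$ $$Q_\gamma(w,A)=\delta_0(A)\int_{\mathbb{R}}\bar p_{\sigma^2\gamma}(\tau_\gamma(w)+\gamma c_\infty,g)\varphi(g)dg+\int_{\mathbb{R}}\mathbb{1}_A(\tau_\gamma(w)+\gamma c_\infty-2\sigma\gamma^{1/2}g)\{1-\bar p_{\sigma^2\gamma}(\tau_\gamma(w)+\gamma c_\infty,g)\}\varphi(g)dg,$$ with $\bar p_{\sigma^2\gamma}(a,g)=1\wedge\varphi_{\sigma^2\gamma}(a-\sigma\sqrt\gamma g)/\varphi_{\sigma^2\gamma}(\sigma\sqrt\gamma g)$, and let $\mu_\gamma$ be its unique invariant probability measure. Then for any $a>0$ there exist explicit constants $\bar\gamma_1\in(0,\bar\gamma]$ and $c_3\ge0$ (not depending on $\gamma$) such that for all $\gamma\in(0,\bar\gamma_1]$, $$\int_{[0,\infty)}[\exp(aw)-1]\,\mu_\gamma(dw)\le c_\infty c_3.$$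
   Context: $\varphi$ is the standard normal density and $\varphi_s(t)=(2\pi s)^{-1/2}e^{-t^2/(2s)}$. *)

theory Defs
  imports "HOL-Probability.Probability"
begin

definition phi_var :: "real \<Rightarrow> real \<Rightarrow> real" where
  "phi_var s t = (2 * pi * s) powr (-1/2) * exp (- (t^2) / (2 * s))"

definition phi :: "real \<Rightarrow> real" where
  "phi t = phi_var 1 t"

definition pbar :: "real \<Rightarrow> real \<Rightarrow> real \<Rightarrow> real" where
  "pbar s a g = min 1 (phi_var s (a - sqrt s * g) / phi_var s (sqrt s * g))"

definition Qker :: "real \<Rightarrow> real \<Rightarrow> (real \<Rightarrow> real \<Rightarrow> real) \<Rightarrow> real \<Rightarrow> real \<Rightarrow> real set \<Rightarrow> real" where
  "Qker \<sigma> cinf \<tau> \<gamma> w A =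
     indicator A (0::real) *
       (LINT g|lborel. pbar (\<sigma>^2 * \<gamma>) (\<tau> \<gamma> w + \<gamma> * cinf) g * phi g)
   + (LINT g|lborel. indicator A (\<tau> \<gamma> w + \<gamma> * cinf - 2 * \<sigma> * sqrt \<gamma> * g)
        * (1 - pbar (\<sigma>^2 * \<gamma>) (\<tau> \<gamma> w + \<gamma> * cinf) g) * phi g)"

end

theory Submission
  imports Defs
begin

lemma phi_std: "phi t = std_normal_density t"
  unfolding phi_def phi_var_def std_normal_density_def
  by (simp add: powr_minus_divide powr_half_sqrt[symmetric] divide_simps)

lemma exp_times_std: "exp (t*g) * std_normal_density g = exp (t^2/2) * normal_density t 1 g"
proof -
  have e: "t*g + (- g\<^sup>2 / 2) = t^2/2 + (- (g - t)\<^sup>2 / 2)"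
    by (simp add: power2_eq_square field_simps)
  have "exp (t*g) * exp (- g\<^sup>2 / 2) = exp (t^2/2) * exp (- (g - t)\<^sup>2 / 2)"
    unfolding exp_add[symmetric] e ..
  then show ?thesis unfolding std_normal_density_def normal_density_def by simp
qed

lemma mgf_std:
  shows "integrable lborel (\<lambda>g. exp (t*g) * std_normal_density g)"
    and "(\<integral>g. exp (t*g) * std_normal_density g \<partial>lborel) = exp (t^2/2)"
  unfolding exp_times_std by auto

definition psi :: "real \<Rightarrow> real" where "psi y = exp (- (y^2) / 2)"

lemma psi_times_std:
  fixes r t :: real
  defines "s \<equiv> sqrt (1 + t^2)"
  shows "psi (r - t*g) * std_normal_density g = (1/s) * psi (r/s) * normal_density (r*t/s^2) (1/s) g"
proof -
  have s0: "s > 0" unfolding s_def by (simp add: add_pos_nonneg)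
  have s2: "s^2 = 1 + t^2" unfolding s_def by (simp add: add_nonneg_nonneg)
  have e: "(- ((r - t*g)^2)/2) + (- (g^2)/2) = (- ((r/s)^2)/2) + (-((g - r*t/s^2)^2) / (2 * (1/s)^2))"
  proof -
    have q: "1 + t^2 > 0" by (simp add: add_pos_nonneg)
    have a: "(r/s)^2 = r^2/(1+t^2)" "(1/s)^2 = 1/(1+t^2)" "s^2 = 1 + t^2" using s2 by (simp_all add: power_divide)
    have k: "\<And>q. q > 0 \<Longrightarrow> q = 1 + t^2 \<Longrightarrow> (- ((r - t*g)^2)/2) + (- (g^2)/2) = (- (r^2/q)/2) + (-((g - r*t/q)^2) / (2 * (1/q)))"
    proof -
      fix q :: real assume q0: "q > 0" and qq: "q = 1 + t^2"
      have 1: "(-((g - r*t/q)^2) / (2 * (1/q))) = -(q*g^2)/2 + g*r*t - (r^2*t^2/q)/2"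
        using q0 by (simp add: field_simps power2_eq_square)
      have 2: "r^2*t^2/q = r^2 - r^2/q" using q0 qq by (simp add: field_simps)
      have 3: "q*g^2 = g^2 + t^2*g^2" using qq by (simp add: algebra_simps)
      define u where "u = r^2/q"
      show "(- ((r - t*g)^2)/2) + (- (g^2)/2) = (- (r^2/q)/2) + (-((g - r*t/q)^2) / (2 * (1/q)))"
        unfolding 1 2 u_def[symmetric] 3 by (simp add: power2_eq_square field_simps)
    qed
    show ?thesis unfolding a using k q by simp
  qed
  have c: "1 / sqrt (2 * pi * (1/s)^2) = s / sqrt (2*pi)"
    using s0 by (simp add: real_sqrt_mult real_sqrt_divide field_simps)
  have ee: "exp (- ((r - t*g)^2)/2) * exp (- (g^2)/2) = exp (- ((r/s)^2)/2) * exp (-((g - r*t/s^2)^2) / (2 * (1/s)^2))"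
    unfolding exp_add[symmetric] e ..
  have "psi (r - t*g) * std_normal_density g = (1 / sqrt (2*pi)) * (exp (- ((r - t*g)^2)/2) * exp (- (g^2)/2))"
    unfolding psi_def std_normal_density_def by simp
  also have "\<dots> = (1 / sqrt (2*pi)) * (exp (- ((r/s)^2)/2) * exp (-((g - r*t/s^2)^2) / (2 * (1/s)^2)))"
    unfolding ee ..
  also have "\<dots> = (1/s) * psi (r/s) * normal_density (r*t/s^2) (1/s) g"
    unfolding psi_def normal_density_def c using s0 by simp
  finally show ?thesis .
qed

lemma psi_pos: "psi x > 0" unfolding psi_def by simp
lemma psi_le1: "psi x \<le> 1" unfolding psi_def by simp
lemma psi_meas[measurable]: "psi \<in> borel_measurable borel" unfolding psi_def by measurable
lemma psi_std: "psi x = sqrt (2*pi) * std_normal_density x"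
  unfolding psi_def std_normal_density_def by simp
lemma psi_integrable: "integrable lborel psi"
  unfolding psi_std[abs_def] by simp

lemma nn_normal_density: "sg > 0 \<Longrightarrow> (\<integral>\<^sup>+x. ennreal (normal_density m sg x) \<partial>lborel) = 1"
  by (subst nn_integral_eq_integral) auto

lemma psi_conv_nn:
  fixes r t :: real
  defines "s \<equiv> sqrt (1 + t^2)"
  shows "(\<integral>\<^sup>+g. ennreal (psi (r - t*g) * std_normal_density g) \<partial>lborel) = ennreal ((1/s) * psi (r/s))"
proof -
  have s0: "s > 0" unfolding s_def by (simp add: add_pos_nonneg)
  have "(\<integral>\<^sup>+g. ennreal (psi (r - t*g) * std_normal_density g) \<partial>lborel)
     = (\<integral>\<^sup>+g. ennreal ((1/s) * psi (r/s)) * ennreal (normal_density (r*t/s^2) (1/s) g) \<partial>lborel)"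
    unfolding psi_times_std s_def
    by (intro nn_integral_cong) (simp add: ennreal_mult[symmetric] psi_pos less_imp_le)
  also have "\<dots> = ennreal ((1/s) * psi (r/s))"
    using s0 by (subst nn_integral_cmult) (simp_all add: nn_normal_density)
  finally show ?thesis .
qed

definition TT :: "real \<Rightarrow> ennreal" where
  "TT v = (\<integral>\<^sup>+r. ennreal (indicator {v..} r * psi r) \<partial>lborel)"

lemma TT_shift: "TT (v - c) = (\<integral>\<^sup>+r. ennreal (indicator {v..} r * psi (r - c)) \<partial>lborel)"
proof -
  have "TT (v - c) = (\<integral>\<^sup>+r. ennreal (indicator {v - c..} (-c + 1 * r) * psi (-c + 1 * r)) \<partial>lborel)"
    unfolding TT_def by (subst nn_integral_real_affine[where c=1 and t="-c"]) auto
  then show ?thesis by (simp add: indicator_def)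
qed

lemma TT_scale:
  assumes s0: "s > 0"
  shows "(\<integral>\<^sup>+r. ennreal (indicator {v..} r * ((1/s) * psi (r/s))) \<partial>lborel) = TT (v/s)"
proof -
  have "(\<integral>\<^sup>+r. ennreal (indicator {v..} r * ((1/s) * psi (r/s))) \<partial>lborel)
      = \<bar>s\<bar> * (\<integral>\<^sup>+r. ennreal (indicator {v..} (0 + s * r) * ((1/s) * psi ((0 + s * r)/s))) \<partial>lborel)"
    using s0 by (subst nn_integral_real_affine[where c=s and t=0]) auto
  also have "\<dots> = (\<integral>\<^sup>+r. ennreal s * ennreal (indicator {v/s..} r * ((1/s) * psi r)) \<partial>lborel)"
    using s0 by (subst nn_integral_cmult) (auto simp: indicator_def field_simps)
  also have "\<dots> = TT (v/s)"
    unfolding TT_def using s0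
    by (intro nn_integral_cong) (simp add: ennreal_mult[symmetric] psi_pos less_imp_le)
  finally show ?thesis .
qed

lemma TT_conv:
  fixes t v :: real
  defines "s \<equiv> sqrt (1 + t^2)"
  shows "(\<integral>\<^sup>+g. TT (v - t*g) * ennreal (std_normal_density g) \<partial>lborel) = TT (v/s)"
proof -
  have s0: "s > 0" unfolding s_def by (simp add: add_pos_nonneg)
  have "(\<integral>\<^sup>+g. TT (v - t*g) * ennreal (std_normal_density g) \<partial>lborel)
      = (\<integral>\<^sup>+g. (\<integral>\<^sup>+r. ennreal (indicator {v..} r * psi (r - t*g) * std_normal_density g) \<partial>lborel) \<partial>lborel)"
    unfolding TT_shift
    by (intro nn_integral_cong, subst nn_integral_multc[symmetric])
       (auto intro!: nn_integral_cong simp: ennreal_mult[symmetric] psi_pos less_imp_le)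
  also have "\<dots> = (\<integral>\<^sup>+r. (\<integral>\<^sup>+g. ennreal (indicator {v..} r * psi (r - t*g) * std_normal_density g) \<partial>lborel) \<partial>lborel)"
    by (rule lborel_pair.Fubini') measurable
  also have "\<dots> = (\<integral>\<^sup>+r. ennreal (indicator {v..} r) * (\<integral>\<^sup>+g. ennreal (psi (r - t*g) * std_normal_density g) \<partial>lborel) \<partial>lborel)"
    by (intro nn_integral_cong, subst nn_integral_cmult[symmetric])
       (auto intro!: nn_integral_cong simp: ennreal_mult[symmetric] psi_pos less_imp_le mult.assoc)
  also have "\<dots> = (\<integral>\<^sup>+r. ennreal (indicator {v..} r * ((1/s) * psi (r/s))) \<partial>lborel)"
    unfolding psi_conv_nn s_def
    by (intro nn_integral_cong) (simp add: ennreal_mult[symmetric] psi_pos less_imp_le)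
  also have "\<dots> = TT (v/s)" by (rule TT_scale[OF s0])
  finally show ?thesis .
qed

lemma psi_nn_finite: "(\<integral>\<^sup>+r. ennreal (psi r) \<partial>lborel) < \<infinity>"
  using psi_integrable psi_pos
  by (subst nn_integral_eq_integral) (auto simp: less_imp_le)

lemma TT_finite: "TT v < \<infinity>"
proof -
  have "TT v \<le> (\<integral>\<^sup>+r. ennreal (psi r) \<partial>lborel)"
    unfolding TT_def by (intro nn_integral_mono) (auto simp: indicator_def)
  then show ?thesis using psi_nn_finite by (simp add: top.not_eq_extremum le_less_trans)
qed

definition Tr :: "real \<Rightarrow> real" where "Tr v = enn2real (TT v)"

lemma TT_Tr: "TT v = ennreal (Tr v)"
  unfolding Tr_def using TT_finite by (simp add: ennreal_enn2real_if less_top[symmetric])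

lemma Tr_nonneg: "Tr v \<ge> 0" unfolding Tr_def by simp

lemma TT_split:
  assumes "a \<le> b"
  shows "TT a = TT b + (\<integral>\<^sup>+r. ennreal (indicator {a..<b} r * psi r) \<partial>lborel)"
proof -
  have "TT a = (\<integral>\<^sup>+r. ennreal (indicator {b..} r * psi r) + ennreal (indicator {a..<b} r * psi r) \<partial>lborel)"
    unfolding TT_def using assms
    by (intro nn_integral_cong) (auto simp: indicator_def psi_pos less_imp_le)
  also have "\<dots> = TT b + (\<integral>\<^sup>+r. ennreal (indicator {a..<b} r * psi r) \<partial>lborel)"
    unfolding TT_def by (rule nn_integral_add) auto
  finally show ?thesis .
qed

lemma Tr_diff:
  assumes ab: "a \<le> b" and m: "m \<ge> 0" "\<And>x. a \<le> x \<Longrightarrow> x \<le> b \<Longrightarrow> m \<le> psi x"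
  shows "m * (b - a) \<le> Tr a - Tr b" "Tr a - Tr b \<le> b - a"
proof -
  define I where "I = (\<integral>\<^sup>+r. ennreal (indicator {a..<b} r * psi r) \<partial>lborel)"
  have up: "I \<le> ennreal (b - a)"
  proof -
    have "I \<le> (\<integral>\<^sup>+r. ennreal (indicator {a..<b} r) \<partial>lborel)"
      unfolding I_def by (intro nn_integral_mono) (auto simp: indicator_def psi_le1)
    also have "\<dots> = ennreal (b - a)" using ab by (simp add: ennreal_indicator)
    finally show ?thesis .
  qed
  have lo: "ennreal (m * (b - a)) \<le> I"
  proof -
    have "ennreal (m * (b - a)) = (\<integral>\<^sup>+r. ennreal m * ennreal (indicator {a..<b} r) \<partial>lborel)"
      using ab m by (subst nn_integral_cmult) (auto simp: ennreal_mult ennreal_indicator)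
    also have "\<dots> \<le> I"
      unfolding I_def using m by (intro nn_integral_mono) (auto simp: indicator_def ennreal_leI)
    finally show ?thesis .
  qed
  have fin: "I < top" using up by (simp add: le_less_trans)
  have Ie: "ennreal (enn2real I) = I" using fin by (simp add: less_top[symmetric])
  have In: "0 \<le> enn2real I" by simp
  have "ennreal (Tr a) = ennreal (Tr b + enn2real I)"
    using TT_split[OF ab] unfolding I_def[symmetric] TT_Tr
    by (simp add: ennreal_plus[OF Tr_nonneg In] Ie)
  then have eq: "Tr a = Tr b + enn2real I"
    using Tr_nonneg[of a] Tr_nonneg[of b] In by (subst (asm) ennreal_inj) auto
  have mba: "0 \<le> m * (b - a)" using m ab by simp
  have "enn2real (ennreal (m * (b - a))) \<le> enn2real I"
    by (rule enn2real_mono[OF lo fin])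
  then show "m * (b - a) \<le> Tr a - Tr b" using eq mba by simp
  have "enn2real I \<le> enn2real (ennreal (b - a))"
    by (rule enn2real_mono[OF up]) simp
  then show "Tr a - Tr b \<le> b - a" using eq ab by simp
qed

definition U1 :: "real \<Rightarrow> real" where "U1 v = (Tr (-v) - Tr v) / 2"

lemma U1_0: "U1 0 = 0" unfolding U1_def by simp
lemma U1_odd: "U1 (-v) = - U1 v" unfolding U1_def by (simp add: field_simps)

lemma Tr_antimono: "a \<le> b \<Longrightarrow> Tr b \<le> Tr a"
  using Tr_diff(1)[of a b 0] by (simp add: less_imp_le psi_pos)

lemma U1_mono: "v1 \<le> v2 \<Longrightarrow> U1 v1 \<le> U1 v2"
  unfolding U1_def using Tr_antimono[of v1 v2] Tr_antimono[of "-v2" "-v1"] by simp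

lemma U1_lip: "v1 \<le> v2 \<Longrightarrow> U1 v2 - U1 v1 \<le> v2 - v1"
proof -
  assume h: "v1 \<le> v2"
  have "Tr v1 - Tr v2 \<le> v2 - v1" 
    using h by (rule Tr_diff(2)[where m=0]) (auto simp: less_imp_le psi_pos)
  have "Tr (-v2) - Tr (-v1) \<le> -v1 - (-v2)"
    using h by (intro Tr_diff(2)[where m=0]) (auto simp: less_imp_le psi_pos)
  with \<open>Tr v1 - Tr v2 \<le> v2 - v1\<close> show ?thesis unfolding U1_def by (simp add: field_simps)
qed

lemma psi_mono_abs: "\<bar>x\<bar> \<le> \<bar>y\<bar> \<Longrightarrow> psi y \<le> psi x"
  unfolding psi_def by (simp add: abs_le_square_iff)

lemma U1_gain:
  assumes "0 \<le> v" "0 \<le> q" "q \<le> 1"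
  shows "(1 - q) * v * psi v \<le> U1 v - U1 (q * v)"
proof -
  have a: "q * v \<le> v" using assms by (simp add: mult_left_le_one_le)
  have b: "0 \<le> q * v" using assms by simp
  have p1: "\<And>x. q * v \<le> x \<Longrightarrow> x \<le> v \<Longrightarrow> psi v \<le> psi x"
    using b assms(1) by (intro psi_mono_abs) auto
  have p2: "\<And>x. -v \<le> x \<Longrightarrow> x \<le> -(q * v) \<Longrightarrow> psi v \<le> psi x"
    using b assms(1) by (intro psi_mono_abs) auto
  have 1: "psi v * (v - q * v) \<le> Tr (q * v) - Tr v"
    using a p1 by (intro Tr_diff(1)) (auto simp: less_imp_le psi_pos)
  have 2: "psi v * (-(q * v) - (-v)) \<le> Tr (-v) - Tr (-(q * v))"
    using a p2 by (intro Tr_diff(1)) (auto simp: less_imp_le psi_pos)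
  have e: "(1 - q) * v * psi v = psi v * (v - q * v)" "psi v * (-(q * v) - (-v)) = psi v * (v - q * v)"
    by (simp_all add: algebra_simps)
  have k: "\<And>X a b c d::real. X \<le> a - b \<Longrightarrow> X \<le> c - d \<Longrightarrow> X \<le> (c - b)/2 - (d - a)/2" by (simp add: field_simps)
  show ?thesis unfolding U1_def e by (rule k[OF 1 2[unfolded e(2)]])
qed

lemma U1_le: "0 \<le> v \<Longrightarrow> U1 v \<le> v"
  using U1_lip[of 0 v] by (simp add: U1_0)
lemma U1_nonneg: "0 \<le> v \<Longrightarrow> 0 \<le> U1 v"
  using U1_mono[of 0 v] by (simp add: U1_0)

lemma Tr_le: "Tr v \<le> Tr (-1 - \<bar>v\<bar>) "
  by (rule Tr_antimono) simp

lemma Tr_bound: "Tr v \<le> enn2real (\<integral>\<^sup>+r. ennreal (psi r) \<partial>lborel)"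
proof -
  have "TT v \<le> (\<integral>\<^sup>+r. ennreal (psi r) \<partial>lborel)"
    unfolding TT_def by (intro nn_integral_mono) (auto simp: indicator_def)
  then show ?thesis unfolding Tr_def using psi_nn_finite
    by (simp add: enn2real_mono)
qed

lemma Tr_meas[measurable]: "Tr \<in> borel_measurable borel"
proof -
  have "mono (\<lambda>v. - Tr v)" by (auto simp: mono_def intro!: Tr_antimono)
  then have "(\<lambda>v. - Tr v) \<in> borel_measurable borel" by (rule borel_measurable_mono)
  then have "(\<lambda>v. - (- Tr v)) \<in> borel_measurable borel" by measurable
  then show ?thesis by simp
qed

lemma U1_meas[measurable]: "U1 \<in> borel_measurable borel"
  by (rule borel_measurable_mono) (auto simp: mono_def intro: U1_mono)

lemma Tr_conv:
  fixes t v :: real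
  shows "integrable lborel (\<lambda>g. Tr (v - t*g) * std_normal_density g)"
    and "(\<integral>g. Tr (v - t*g) * std_normal_density g \<partial>lborel) = Tr (v / sqrt (1 + t^2))"
proof -
  define B where "B = enn2real (\<integral>\<^sup>+r. ennreal (psi r) \<partial>lborel)"
  show int: "integrable lborel (\<lambda>g. Tr (v - t*g) * std_normal_density g)"
  proof (rule Bochner_Integration.integrable_bound)
    show "integrable lborel (\<lambda>g. B * std_normal_density g)" by simp
    show "AE g in lborel. norm (Tr (v - t*g) * std_normal_density g) \<le> norm (B * std_normal_density g)"
    proof (rule AE_I2)
      fix g
      have "\<bar>Tr (v - t*g)\<bar> \<le> \<bar>B\<bar>" using Tr_bound[of "v - t*g"] Tr_nonneg[of "v - t*g"] unfolding B_def by simp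
      then show "norm (Tr (v - t*g) * std_normal_density g) \<le> norm (B * std_normal_density g)"
        by (simp add: abs_mult mult_right_mono)
    qed
  qed measurable
  have "(\<integral>g. Tr (v - t*g) * std_normal_density g \<partial>lborel)
      = enn2real (\<integral>\<^sup>+g. ennreal (Tr (v - t*g) * std_normal_density g) \<partial>lborel)"
    by (rule integral_eq_nn_integral) (auto simp: Tr_nonneg)
  also have "(\<integral>\<^sup>+g. ennreal (Tr (v - t*g) * std_normal_density g) \<partial>lborel)
      = (\<integral>\<^sup>+g. TT (v - t*g) * ennreal (std_normal_density g) \<partial>lborel)"
    by (intro nn_integral_cong) (simp add: TT_Tr ennreal_mult Tr_nonneg)
  also have "\<dots> = TT (v / sqrt (1 + t^2))" by (rule TT_conv)
  finally show "(\<integral>g. Tr (v - t*g) * std_normal_density g \<partial>lborel) = Tr (v / sqrt (1 + t^2))"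
    by (simp add: TT_Tr Tr_nonneg)
qed

lemma U1_conv:
  fixes t u :: real
  shows "integrable lborel (\<lambda>g. U1 (u - t*g) * std_normal_density g)"
    and "(\<integral>g. U1 (u - t*g) * std_normal_density g \<partial>lborel) = U1 (u / sqrt (1 + t^2))"
proof -
  have e: "\<And>g. U1 (u - t*g) * std_normal_density g
     = (Tr (-u - (-t)*g) * std_normal_density g - Tr (u - t*g) * std_normal_density g) / 2"
    unfolding U1_def by (simp add: algebra_simps diff_divide_distrib)
  show "integrable lborel (\<lambda>g. U1 (u - t*g) * std_normal_density g)"
    unfolding e using Tr_conv(1)[of "-u" "-t"] Tr_conv(1)[of u t] by auto
  show "(\<integral>g. U1 (u - t*g) * std_normal_density g \<partial>lborel) = U1 (u / sqrt (1 + t^2))"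
    unfolding e using Tr_conv[of "-u" "-t"] Tr_conv[of u t]
    by (simp add: U1_def)
qed

lemma phi_pos: "phi t > 0" unfolding phi_std by (simp add: normal_density_pos)
lemma phi_meas[measurable]: "phi \<in> borel_measurable borel" unfolding phi_std[abs_def] by simp
lemma phi_integrable: "integrable lborel phi" unfolding phi_std[abs_def] by simp
lemma phi_nn: "(\<integral>\<^sup>+g. ennreal (phi g) \<partial>lborel) = 1"
  unfolding phi_std by (rule nn_normal_density) simp

lemma phi_var_nonneg: "s > 0 \<Longrightarrow> phi_var s t \<ge> 0" unfolding phi_var_def by simp
lemma phi_var_pos: "s > 0 \<Longrightarrow> phi_var s t > 0" unfolding phi_var_def by simp

lemma pbar_nonneg: "s > 0 \<Longrightarrow> 0 \<le> pbar s a g"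
  unfolding pbar_def using phi_var_pos[of s] by (simp add: less_imp_le)
lemma pbar_le1: "pbar s a g \<le> 1" unfolding pbar_def by simp

lemma phi_var_meas[measurable]: "phi_var s \<in> borel_measurable borel"
  unfolding phi_var_def[abs_def] by measurable

lemma pbar_meas[measurable (raw)]:
  assumes [measurable]: "f \<in> borel_measurable M" "g \<in> borel_measurable M"
  shows "(\<lambda>x. pbar s (f x) (g x)) \<in> borel_measurable M"
  unfolding pbar_def by measurable

lemma ratio_phi:
  assumes s: "s > 0"
  shows "phi_var s (a - sqrt s * g) / phi_var s (sqrt s * g) = phi (a / sqrt s - g) / phi g"
proof -
  have h: "sqrt s > 0" using s by simp
  have e1: "phi_var s (a - sqrt s * g) / phi_var s (sqrt s * g)
      = exp (- ((a - sqrt s * g)^2) / (2 * s)) / exp (- ((sqrt s * g)^2) / (2 * s))"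
    unfolding phi_var_def using s by simp
  have e2: "phi (a / sqrt s - g) / phi g = exp (- ((a / sqrt s - g)^2) / (2 * 1)) / exp (- (g^2) / (2 * 1))"
    unfolding phi_def phi_var_def by simp
  have e3: "- ((a - sqrt s * g)^2) / (2 * s) = - ((a / sqrt s - g)^2) / (2 * 1)"
    "- ((sqrt s * g)^2) / (2 * s) = - (g^2) / (2 * 1)"
    using s h by (simp_all add: field_simps power2_eq_square real_sqrt_mult[symmetric])
  show ?thesis unfolding e1 e2 e3 ..
qed

lemma pbar_phi:
  assumes s: "s > 0"
  shows "pbar s a g * phi g = min (phi g) (phi (a / sqrt s - g))"
proof -
  have p: "phi g > 0" by (rule phi_pos)
  have "pbar s a g * phi g = min 1 (phi (a / sqrt s - g) / phi g) * phi g"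
    unfolding pbar_def ratio_phi[OF s] ..
  also have "\<dots> = min (phi g) (phi (a / sqrt s - g))"
    using p by (simp add: min_mult_distrib_right)
  finally show ?thesis .
qed

lemma phi_mono_abs: "\<bar>x\<bar> \<le> \<bar>y\<bar> \<Longrightarrow> phi y \<le> phi x"
proof -
  assume "\<bar>x\<bar> \<le> \<bar>y\<bar>"
  then have "x^2 \<le> y^2" by (simp add: abs_le_square_iff)
  then have "exp (- (y^2) / 2) \<le> exp (- (x^2) / 2)" by simp
  then show ?thesis unfolding phi_std std_normal_density_def
    by (intro mult_left_mono) auto
qed

lemma pbar_one:
  assumes s: "s > 0" and a: "a \<ge> 0" and le: "a - 2 * sqrt s * g \<le> 0"
  shows "pbar s a g = 1"
proof -
  have h: "sqrt s > 0" using s by simp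
  have "a / sqrt s \<le> 2 * g" using le h by (simp add: field_simps)
  moreover have "a / sqrt s \<ge> 0" using a h by simp
  ultimately have "\<bar>a / sqrt s - g\<bar> \<le> \<bar>g\<bar>" by linarith
  then have "phi g \<le> phi (a / sqrt s - g)" by (rule phi_mono_abs)
  then have "1 \<le> phi (a / sqrt s - g) / phi g" using phi_pos[of g] by simp
  then show ?thesis unfolding pbar_def ratio_phi[OF s] by simp
qed

definition Kn :: "real \<Rightarrow> (real \<Rightarrow> ennreal) \<Rightarrow> real \<Rightarrow> ennreal" where
  "Kn s f a = f 0 * (\<integral>\<^sup>+g. ennreal (pbar s a g * phi g) \<partial>lborel)
      + (\<integral>\<^sup>+g. f (a - 2 * sqrt s * g) * ennreal ((1 - pbar s a g) * phi g) \<partial>lborel)"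

lemma pbar_phi_integrable: "s > 0 \<Longrightarrow> integrable lborel (\<lambda>g. pbar s a g * phi g)"
  apply (rule Bochner_Integration.integrable_bound[OF phi_integrable])
   apply measurable
  using pbar_nonneg pbar_le1 phi_pos by (auto intro!: AE_I2 simp: abs_mult less_imp_le mult_left_le_one_le)

lemma K_indicator:
  assumes s: "s > 0" and A[measurable]: "A \<in> sets borel"
  shows "ennreal (indicator A 0 * (\<integral>g. pbar s a g * phi g \<partial>lborel)
          + (\<integral>g. indicator A (a - 2 * sqrt s * g) * (1 - pbar s a g) * phi g \<partial>lborel))
       = Kn s (indicator A) a"
proof -
  have i1: "integrable lborel (\<lambda>g. pbar s a g * phi g)" by (rule pbar_phi_integrable[OF s])
  have i2: "integrable lborel (\<lambda>g. indicator A (a - 2 * sqrt s * g) * (1 - pbar s a g) * phi g)"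
    apply (rule Bochner_Integration.integrable_bound[OF phi_integrable])
     apply measurable
    using pbar_nonneg[OF s] pbar_le1 phi_pos
    by (auto intro!: AE_I2 simp: abs_mult less_imp_le mult_left_le_one_le indicator_def)
  have n1: "0 \<le> (\<integral>g. pbar s a g * phi g \<partial>lborel)"
    using pbar_nonneg[OF s] phi_pos by (auto intro!: integral_nonneg_AE simp: less_imp_le)
  have n2: "0 \<le> (\<integral>g. indicator A (a - 2 * sqrt s * g) * (1 - pbar s a g) * phi g \<partial>lborel)"
    using pbar_le1 phi_pos by (auto intro!: integral_nonneg_AE simp: less_imp_le)
  have e1: "ennreal (\<integral>g. pbar s a g * phi g \<partial>lborel) = (\<integral>\<^sup>+g. ennreal (pbar s a g * phi g) \<partial>lborel)"
    using i1 pbar_nonneg[OF s] phi_pos by (subst nn_integral_eq_integral) (auto simp: less_imp_le)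
  have e2: "ennreal (\<integral>g. indicator A (a - 2 * sqrt s * g) * (1 - pbar s a g) * phi g \<partial>lborel)
      = (\<integral>\<^sup>+g. ennreal (indicator A (a - 2 * sqrt s * g) * (1 - pbar s a g) * phi g) \<partial>lborel)"
    using i2 pbar_le1 phi_pos by (subst nn_integral_eq_integral) (auto simp: less_imp_le)
  have e3: "(\<integral>\<^sup>+g. ennreal (indicator A (a - 2 * sqrt s * g) * (1 - pbar s a g) * phi g) \<partial>lborel)
     = (\<integral>\<^sup>+g. indicator A (a - 2 * sqrt s * g) * ennreal ((1 - pbar s a g) * phi g) \<partial>lborel)"
    by (intro nn_integral_cong) (auto simp: indicator_def)
  have p: "ennreal (indicator A 0 * (\<integral>g. pbar s a g * phi g \<partial>lborel)
          + (\<integral>g. indicator A (a - 2 * sqrt s * g) * (1 - pbar s a g) * phi g \<partial>lborel))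
      = ennreal (indicator A 0 * (\<integral>g. pbar s a g * phi g \<partial>lborel))
          + ennreal (\<integral>g. indicator A (a - 2 * sqrt s * g) * (1 - pbar s a g) * phi g \<partial>lborel)"
    using n1 n2 by (intro ennreal_plus) auto
  have q: "ennreal (indicator A 0 * (\<integral>g. pbar s a g * phi g \<partial>lborel))
      = indicator A 0 * ennreal (\<integral>g. pbar s a g * phi g \<partial>lborel)"
    by (simp add: indicator_def)
  show ?thesis
    unfolding Kn_def p q e1 e2 e3 ..
qed

lemma refl_zero:
  assumes s: "s > 0" and odd: "\<And>y. F (-y) = - F y"
  shows "(\<integral>g. F (a - 2 * sqrt s * g) * (pbar s a g * phi g) \<partial>lborel) = 0"
proof -
  define h where "h = sqrt s"
  have h: "h > 0" unfolding h_def using s by simp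
  define G where "G g = F (a - 2 * h * g) * min (phi g) (phi (a / h - g))" for g
  have eG: "\<And>g. F (a - 2 * sqrt s * g) * (pbar s a g * phi g) = G g"
    unfolding G_def h_def pbar_phi[OF s] ..
  have sym: "\<And>g. G (a / h + (-1) * g) = - G g"
  proof -
    fix g
    have 1: "a - 2 * h * (a / h + (-1) * g) = - (a - 2 * h * g)" using h by (simp add: field_simps)
    have 2: "a / h - (a / h + (-1) * g) = g" by simp
    show "G (a / h + (-1) * g) = - G g"
      unfolding G_def 1 2 odd by (simp add: min.commute)
  qed
  have "(\<integral>g. G g \<partial>lborel) = \<bar>-1\<bar> *\<^sub>R (\<integral>g. G (a / h + (-1) * g) \<partial>lborel)"
    by (rule lborel_integral_real_affine) simp
  also have "\<dots> = - (\<integral>g. G g \<partial>lborel)" unfolding sym by simp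
  finally have "(\<integral>g. G g \<partial>lborel) = 0" by simp
  then show ?thesis unfolding eG .
qed

lemma K_refl:
  assumes s: "s > 0" and a: "a \<ge> 0" and odd: "\<And>y. F (-y) = - F y"
    and pos: "\<And>y. y \<ge> 0 \<Longrightarrow> F y \<ge> 0"
    and Fm[measurable]: "F \<in> borel_measurable borel"
    and int: "integrable lborel (\<lambda>g. F (a - 2 * sqrt s * g) * phi g)"
  shows "Kn s (\<lambda>y. ennreal (F y)) a = ennreal (\<integral>g. F (a - 2 * sqrt s * g) * phi g \<partial>lborel)"
proof -
  have F0: "F 0 = 0" using odd[of 0] by simp
  have nn: "\<And>g. 0 \<le> F (a - 2 * sqrt s * g) * ((1 - pbar s a g) * phi g)"
  proof -
    fix g
    show "0 \<le> F (a - 2 * sqrt s * g) * ((1 - pbar s a g) * phi g)"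
    proof (cases "a - 2 * sqrt s * g \<ge> 0")
      case True
      then show ?thesis using pos pbar_le1[of s a g] phi_pos[of g] by (simp add: less_imp_le)
    next
      case False
      then have "pbar s a g = 1" using pbar_one[OF s a] by simp
      then show ?thesis by simp
    qed
  qed
  have e1: "\<And>g. ennreal (F (a - 2 * sqrt s * g)) * ennreal ((1 - pbar s a g) * phi g)
      = ennreal (F (a - 2 * sqrt s * g) * ((1 - pbar s a g) * phi g))"
  proof -
    fix g
    show "ennreal (F (a - 2 * sqrt s * g)) * ennreal ((1 - pbar s a g) * phi g)
      = ennreal (F (a - 2 * sqrt s * g) * ((1 - pbar s a g) * phi g))"
    proof (cases "a - 2 * sqrt s * g \<ge> 0")
      case True
      then show ?thesis using pos pbar_le1[of s a g] phi_pos[of g] by (simp add: ennreal_mult less_imp_le)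
    next
      case False
      then have "pbar s a g = 1" using pbar_one[OF s a] by simp
      then show ?thesis by simp
    qed
  qed
  have int1: "integrable lborel (\<lambda>g. F (a - 2 * sqrt s * g) * ((1 - pbar s a g) * phi g))"
    apply (rule Bochner_Integration.integrable_bound[OF int])
     apply measurable
    using pbar_nonneg[OF s] pbar_le1 phi_pos
    by (auto intro!: AE_I2 mult_left_mono simp: abs_mult less_imp_le mult_left_le_one_le)
  have int2: "integrable lborel (\<lambda>g. F (a - 2 * sqrt s * g) * (pbar s a g * phi g))"
    apply (rule Bochner_Integration.integrable_bound[OF int])
     apply measurable
    using pbar_nonneg[OF s] pbar_le1 phi_pos
    by (auto intro!: AE_I2 mult_left_mono simp: abs_mult less_imp_le mult_left_le_one_le)
  have "Kn s (\<lambda>y. ennreal (F y)) a = (\<integral>\<^sup>+g. ennreal (F (a - 2 * sqrt s * g) * ((1 - pbar s a g) * phi g)) \<partial>lborel)"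
    unfolding Kn_def F0 e1 by simp
  also have "\<dots> = ennreal (\<integral>g. F (a - 2 * sqrt s * g) * ((1 - pbar s a g) * phi g) \<partial>lborel)"
    using int1 nn by (subst nn_integral_eq_integral) auto
  also have "(\<integral>g. F (a - 2 * sqrt s * g) * ((1 - pbar s a g) * phi g) \<partial>lborel)
      = (\<integral>g. F (a - 2 * sqrt s * g) * phi g - F (a - 2 * sqrt s * g) * (pbar s a g * phi g) \<partial>lborel)"
    by (intro Bochner_Integration.integral_cong) (auto simp: algebra_simps)
  also have "\<dots> = (\<integral>g. F (a - 2 * sqrt s * g) * phi g \<partial>lborel)"
    using int int2 refl_zero[of s F a, OF s odd] by simp
  finally show ?thesis .
qed

lemma sinh_conv:
  fixes b a h :: real
  shows "integrable lborel (\<lambda>g. sinh (b * (a - 2 * h * g)) * phi g)"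
    and "(\<integral>g. sinh (b * (a - 2 * h * g)) * phi g \<partial>lborel) = exp (2 * b^2 * h^2) * sinh (b * a)"
proof -
  have e: "\<And>g. sinh (b * (a - 2 * h * g)) * phi g
     = (exp (b*a) / 2) * (exp ((-2*b*h) * g) * std_normal_density g) - (exp (-(b*a)) / 2) * (exp ((2*b*h) * g) * std_normal_density g)"
    unfolding sinh_def phi_std by (simp add: algebra_simps exp_add[symmetric] exp_diff diff_divide_distrib)
  show "integrable lborel (\<lambda>g. sinh (b * (a - 2 * h * g)) * phi g)"
    unfolding e by (intro Bochner_Integration.integrable_diff integrable_mult_right mgf_std(1))
  have "(\<integral>g. sinh (b * (a - 2 * h * g)) * phi g \<partial>lborel)
      = (exp (b*a) / 2) * exp ((-2*b*h)^2/2) - (exp (-(b*a)) / 2) * exp ((2*b*h)^2/2)"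
  proof -
    have "(\<integral>g. (exp (b*a) / 2) * (exp ((-2*b*h) * g) * std_normal_density g) - (exp (-(b*a)) / 2) * (exp ((2*b*h) * g) * std_normal_density g) \<partial>lborel)
       = (\<integral>g. (exp (b*a) / 2) * (exp ((-2*b*h) * g) * std_normal_density g) \<partial>lborel) - (\<integral>g. (exp (-(b*a)) / 2) * (exp ((2*b*h) * g) * std_normal_density g) \<partial>lborel)"
      by (rule Bochner_Integration.integral_diff) (intro integrable_mult_right mgf_std(1))+
    also have "\<dots> = (exp (b*a) / 2) * (\<integral>g. exp ((-2*b*h) * g) * std_normal_density g \<partial>lborel) - (exp (-(b*a)) / 2) * (\<integral>g. exp ((2*b*h) * g) * std_normal_density g \<partial>lborel)"
      by (simp only: integral_mult_right_zero)
    also have "\<dots> = (exp (b*a) / 2) * exp ((-2*b*h)^2/2) - (exp (-(b*a)) / 2) * exp ((2*b*h)^2/2)"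
      by (simp only: mgf_std(2))
    finally show ?thesis unfolding e .
  qed
  also have "\<dots> = exp (2 * b^2 * h^2) * sinh (b * a)"
    unfolding sinh_def by (simp add: power_mult_distrib algebra_simps diff_divide_distrib)
  finally show "(\<integral>g. sinh (b * (a - 2 * h * g)) * phi g \<partial>lborel) = exp (2 * b^2 * h^2) * sinh (b * a)" .
qed

lemma Kn_meas[measurable]:
  assumes [measurable]: "f \<in> borel_measurable borel"
  shows "Kn s f \<in> borel_measurable borel"
  unfolding Kn_def[abs_def] by measurable

lemma Kn_mono: "(\<And>y. f y \<le> g y) \<Longrightarrow> Kn s f a \<le> Kn s g a"
  unfolding Kn_def
  by (intro add_mono mult_right_mono nn_integral_mono mult_right_mono) auto

lemma inv_ext:
  fixes \<mu> :: "real measure"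
  assumes s: "s > 0" and sets[measurable_cong]: "sets \<mu> = sets borel"
    and X[measurable]: "X \<in> borel_measurable borel"
    and inv: "\<And>A. A \<in> sets borel \<Longrightarrow> emeasure \<mu> A = (\<integral>\<^sup>+w. Kn s (indicator A) (X w) \<partial>\<mu>)"
    and f: "f \<in> borel_measurable borel"
  shows "(\<integral>\<^sup>+w. f w \<partial>\<mu>) = (\<integral>\<^sup>+w. Kn s f (X w) \<partial>\<mu>)"
  using f
proof (induct rule: borel_measurable_induct)
  case (cong f g)
  then have "f = g" by auto
  then show ?case using cong by simp
next
  case (set A)
  then show ?case using inv[OF set] sets by simp
next
  case (mult u c)
  note [measurable] = mult(2)
  have k: "\<And>a. Kn s (\<lambda>x. c * u x) a = c * Kn s u a"
  proof -
    fix a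
    have e: "(\<integral>\<^sup>+g. (c * u (a - 2 * sqrt s * g)) * ennreal ((1 - pbar s a g) * phi g) \<partial>lborel)
       = c * (\<integral>\<^sup>+g. u (a - 2 * sqrt s * g) * ennreal ((1 - pbar s a g) * phi g) \<partial>lborel)"
      by (simp only: mult.assoc, rule nn_integral_cmult) measurable
    show "Kn s (\<lambda>x. c * u x) a = c * Kn s u a"
      unfolding Kn_def e by (simp add: distrib_left mult.assoc)
  qed
  show ?case unfolding k
    by (subst nn_integral_cmult, measurable)+ (simp add: mult(4))
next
  case (add u v)
  note [measurable] = add(1) add(4)
  have k: "\<And>a. Kn s (\<lambda>x. v x + u x) a = Kn s v a + Kn s u a"
  proof -
    fix a
    have "(\<integral>\<^sup>+g. (v (a - 2 * sqrt s * g) + u (a - 2 * sqrt s * g)) * ennreal ((1 - pbar s a g) * phi g) \<partial>lborel)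
       = (\<integral>\<^sup>+g. v (a - 2 * sqrt s * g) * ennreal ((1 - pbar s a g) * phi g) + u (a - 2 * sqrt s * g) * ennreal ((1 - pbar s a g) * phi g) \<partial>lborel)"
      by (simp add: distrib_right)
    also have "\<dots> = (\<integral>\<^sup>+g. v (a - 2 * sqrt s * g) * ennreal ((1 - pbar s a g) * phi g) \<partial>lborel)
        + (\<integral>\<^sup>+g. u (a - 2 * sqrt s * g) * ennreal ((1 - pbar s a g) * phi g) \<partial>lborel)"
      by (rule nn_integral_add) measurable
    finally show "Kn s (\<lambda>x. v x + u x) a = Kn s v a + Kn s u a"
      unfolding Kn_def by (simp add: distrib_right algebra_simps)
  qed
  show ?case unfolding k
    by (subst nn_integral_add, measurable)+ (simp add: add(3) add(7))
next
  case (seq U)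
  note [measurable] = seq(1)
  have incK: "\<And>a. incseq (\<lambda>i. Kn s (U i) a)"
    using seq(4) by (auto simp: incseq_def le_fun_def intro!: Kn_mono)
  have k: "\<And>a. Kn s (SUP i. U i) a = (SUP i. Kn s (U i) a)"
  proof -
    fix a
    have i1: "incseq (\<lambda>i. U i 0 * (\<integral>\<^sup>+g. ennreal (pbar s a g * phi g) \<partial>lborel))"
      using seq(4) by (auto simp: incseq_def le_fun_def intro!: mult_right_mono)
    have i2f: "incseq (\<lambda>i g. U i (a - 2 * sqrt s * g) * ennreal ((1 - pbar s a g) * phi g))"
      using seq(4) by (auto simp: incseq_def le_fun_def intro!: mult_right_mono)
    have i2: "incseq (\<lambda>i. \<integral>\<^sup>+g. U i (a - 2 * sqrt s * g) * ennreal ((1 - pbar s a g) * phi g) \<partial>lborel)"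
      using i2f by (auto simp: incseq_def le_fun_def intro!: nn_integral_mono)
    have "(\<integral>\<^sup>+g. (SUP i. U i) (a - 2 * sqrt s * g) * ennreal ((1 - pbar s a g) * phi g) \<partial>lborel)
       = (\<integral>\<^sup>+g. (SUP i. U i (a - 2 * sqrt s * g) * ennreal ((1 - pbar s a g) * phi g)) \<partial>lborel)"
      by (simp only: SUP_apply SUP_mult_right_ennreal)
    also have "\<dots> = (SUP i. \<integral>\<^sup>+g. U i (a - 2 * sqrt s * g) * ennreal ((1 - pbar s a g) * phi g) \<partial>lborel)"
      by (rule nn_integral_monotone_convergence_SUP[OF i2f]) measurable
    finally have e2: "(\<integral>\<^sup>+g. (SUP i. U i) (a - 2 * sqrt s * g) * ennreal ((1 - pbar s a g) * phi g) \<partial>lborel)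
       = (SUP i. \<integral>\<^sup>+g. U i (a - 2 * sqrt s * g) * ennreal ((1 - pbar s a g) * phi g) \<partial>lborel)" .
    have e1: "(SUP i. U i) 0 * (\<integral>\<^sup>+g. ennreal (pbar s a g * phi g) \<partial>lborel)
       = (SUP i. U i 0 * (\<integral>\<^sup>+g. ennreal (pbar s a g * phi g) \<partial>lborel))"
      by (simp only: SUP_apply SUP_mult_right_ennreal)
    show "Kn s (SUP i. U i) a = (SUP i. Kn s (U i) a)"
      unfolding Kn_def e1 e2 by (rule ennreal_SUP_add[OF i1 i2, symmetric])
  qed
  have "(\<integral>\<^sup>+w. (SUP i. U i) w \<partial>\<mu>) = (SUP i. \<integral>\<^sup>+w. U i w \<partial>\<mu>)"
    unfolding SUP_apply by (rule nn_integral_monotone_convergence_SUP[OF seq(4)]) measurable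
  also have "\<dots> = (SUP i. \<integral>\<^sup>+w. Kn s (U i) (X w) \<partial>\<mu>)" using seq(3) by simp
  also have "\<dots> = (\<integral>\<^sup>+w. (SUP i. Kn s (U i) (X w)) \<partial>\<mu>)"
    by (rule nn_integral_monotone_convergence_SUP[symmetric])
       (use incK in \<open>auto simp: incseq_def le_fun_def\<close>)
  also have "\<dots> = (\<integral>\<^sup>+w. Kn s (SUP i. U i) (X w) \<partial>\<mu>)" unfolding k ..
  finally show ?case .
qed

lemma Kn_cmult:
  assumes [measurable]: "f \<in> borel_measurable borel"
  shows "Kn s (\<lambda>x. c * f x) a = c * Kn s f a"
proof -
  have e: "(\<integral>\<^sup>+g. (c * f (a - 2 * sqrt s * g)) * ennreal ((1 - pbar s a g) * phi g) \<partial>lborel)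
     = c * (\<integral>\<^sup>+g. f (a - 2 * sqrt s * g) * ennreal ((1 - pbar s a g) * phi g) \<partial>lborel)"
    by (simp only: mult.assoc, rule nn_integral_cmult) measurable
  show ?thesis
    unfolding Kn_def e by (simp add: distrib_left mult.assoc)
qed

lemma Kn_bound:
  assumes s: "s > 0" and f0: "f 0 = 0" and fk: "\<And>y. f y \<le> k"
  shows "Kn s f a \<le> k"
proof -
  have "Kn s f a = (\<integral>\<^sup>+g. f (a - 2 * sqrt s * g) * ennreal ((1 - pbar s a g) * phi g) \<partial>lborel)"
    unfolding Kn_def f0 by simp
  also have "\<dots> \<le> (\<integral>\<^sup>+g. k * ennreal (phi g) \<partial>lborel)"
  proof (intro nn_integral_mono mult_mono)
    fix g
    show "ennreal ((1 - pbar s a g) * phi g) \<le> ennreal (phi g)"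
      using pbar_nonneg[OF s, of a g] phi_pos[of g] by (intro ennreal_leI) (simp add: mult_left_le_one_le less_imp_le)
  qed (auto simp: fk)
  also have "\<dots> = k" by (subst nn_integral_cmult) (auto simp: phi_nn)
  finally show ?thesis .
qed

lemma INF_pow_zero:
  fixes lam u :: real
  assumes "0 \<le> lam" "lam < 1"
  shows "(INF n. ennreal (lam^n * u)) = 0"
proof -
  have d: "decseq (\<lambda>n. ennreal (lam^n * u))"
  proof (cases "u \<ge> 0")
    case True
    then show ?thesis using assms
      by (auto simp: decseq_def intro!: ennreal_leI mult_right_mono power_decreasing)
  next
    case False
    then have "\<And>n. ennreal (lam^n * u) = 0" using assms
      by (intro ennreal_neg mult_nonneg_nonpos) auto
    then show ?thesis by (simp add: decseq_def)
  qed
  have "(\<lambda>n. lam^n * u) \<longlonglongrightarrow> 0 * u"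
    using assms by (intro tendsto_mult LIMSEQ_power_zero) auto
  then have "(\<lambda>n. ennreal (lam^n * u)) \<longlonglongrightarrow> ennreal 0"
    by (intro tendsto_ennrealI) simp
  then show ?thesis using LIMSEQ_INF[OF d] LIMSEQ_unique by fastforce
qed

lemma drift_bound:
  fixes \<mu> :: "real measure" and U X :: "real \<Rightarrow> real"
  assumes s: "s > 0" and P: "prob_space \<mu>" and sets[measurable_cong]: "sets \<mu> = sets borel"
    and inv: "\<And>f. f \<in> borel_measurable borel \<Longrightarrow> (\<integral>\<^sup>+w. f w \<partial>\<mu>) = (\<integral>\<^sup>+w. Kn s f (X w) \<partial>\<mu>)"
    and AEpos: "AE w in \<mu>. w \<ge> 0"
    and Um[measurable]: "U \<in> borel_measurable borel" and U0: "U 0 = 0"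
    and drift: "\<And>w. w \<ge> 0 \<Longrightarrow> Kn s (\<lambda>y. ennreal (U y)) (X w) \<le> ennreal (lam * U w + B)"
    and lam: "0 < lam" "lam < 1" and B: "B \<ge> 0"
    and Upos: "\<And>w. w \<ge> 0 \<Longrightarrow> U w \<ge> 0"
  shows "(\<integral>\<^sup>+w. ennreal (U w) \<partial>\<mu>) \<le> ennreal (B / (1 - lam))"
proof -
  interpret prob_space \<mu> by (rule P)
  define c where "c = B / (1 - lam)"
  have c0: "c \<ge> 0" unfolding c_def using lam B by simp
  define f where "f n r y = ennreal (min (lam^n * U y) r)" for n :: nat and r y :: real
  have fm[measurable]: "\<And>n r. f n r \<in> borel_measurable borel" unfolding f_def[abs_def] by measurable
  have G0: "\<And>r. r \<ge> 0 \<Longrightarrow> (\<integral>\<^sup>+w. f 0 r w \<partial>\<mu>) \<le> ennreal c"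
  proof -
    fix r :: real assume r: "r \<ge> 0"
    define G where "G n = (\<integral>\<^sup>+w. f n r w \<partial>\<mu>)" for n
    have step: "\<And>n. G n \<le> G (Suc n) + ennreal (lam^n * B)"
    proof -
      fix n
      have pw: "\<And>w. w \<ge> 0 \<Longrightarrow> Kn s (f n r) (X w) \<le> f (Suc n) r w + ennreal (lam^n * B)"
      proof -
        fix w :: real assume w: "w \<ge> 0"
        have lp: "0 \<le> lam^n" using lam by simp
        have a1: "Kn s (f n r) (X w) \<le> Kn s (\<lambda>y. ennreal (lam^n) * ennreal (U y)) (X w)"
        proof (rule Kn_mono)
          fix y
          show "f n r y \<le> ennreal (lam^n) * ennreal (U y)"
          proof (cases "U y \<ge> 0")
            case True
            then show ?thesis unfolding f_def using lp
              by (simp add: ennreal_mult[symmetric] ennreal_leI)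
          next
            case False
            then have "min (lam^n * U y) r \<le> 0" using lp
              by (simp add: mult_nonneg_nonpos min.coboundedI1)
            then show ?thesis unfolding f_def by (simp add: ennreal_neg)
          qed
        qed
        also have "\<dots> = ennreal (lam^n) * Kn s (\<lambda>y. ennreal (U y)) (X w)"
          by (rule Kn_cmult) measurable
        also have "\<dots> \<le> ennreal (lam^n) * ennreal (lam * U w + B)"
          by (intro mult_left_mono drift[OF w]) simp
        also have "\<dots> = ennreal (lam^n * (lam * U w + B))" using lp by (simp add: ennreal_mult')
        finally have k1: "Kn s (f n r) (X w) \<le> ennreal (lam^n * (lam * U w + B))" .
        have k2: "Kn s (f n r) (X w) \<le> ennreal r"
          using s by (rule Kn_bound) (auto simp: f_def U0 r ennreal_leI)
        have "Kn s (f n r) (X w) \<le> min (ennreal r) (ennreal (lam^n * (lam * U w + B)))"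
          using k1 k2 by simp
        also have "\<dots> = ennreal (min r (lam^n * (lam * U w + B)))"
          using r lp Upos[OF w] lam B by (intro min_ennreal) auto
        also have "\<dots> \<le> ennreal (min (lam^(Suc n) * U w) r + lam^n * B)"
          using mult_nonneg_nonneg[OF lp B] by (intro ennreal_leI) (auto simp: algebra_simps min_def)
        also have "\<dots> = f (Suc n) r w + ennreal (lam^n * B)"
          unfolding f_def using lp B r Upos[OF w] lam
          by (intro ennreal_plus) (auto simp: min_def)
        finally show "Kn s (f n r) (X w) \<le> f (Suc n) r w + ennreal (lam^n * B)" .
      qed
      have "G n = (\<integral>\<^sup>+w. Kn s (f n r) (X w) \<partial>\<mu>)" unfolding G_def by (rule inv) measurable
      also have "\<dots> \<le> (\<integral>\<^sup>+w. f (Suc n) r w + ennreal (lam^n * B) \<partial>\<mu>)"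
        by (rule nn_integral_mono_AE) (use AEpos pw in auto)
      also have "\<dots> = G (Suc n) + ennreal (lam^n * B)"
        unfolding G_def by (subst nn_integral_add) (auto simp: emeasure_space_1)
      finally show "G n \<le> G (Suc n) + ennreal (lam^n * B)" .
    qed
    have ind: "\<And>n. G 0 \<le> G n + ennreal (B * (\<Sum>i<n. lam^i))"
    proof -
      fix n show "G 0 \<le> G n + ennreal (B * (\<Sum>i<n. lam^i))"
      proof (induct n)
        case 0 then show ?case by simp
      next
        case (Suc n)
        have sn: "0 \<le> B * (\<Sum>i<n. lam^i)" using B lam by (intro mult_nonneg_nonneg sum_nonneg) auto
        have "G 0 \<le> G (Suc n) + ennreal (lam^n * B) + ennreal (B * (\<Sum>i<n. lam^i))"
          using Suc step[of n] by (metis add_right_mono order_trans)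
        also have "\<dots> = G (Suc n) + ennreal (B * (\<Sum>i<Suc n. lam^i))"
        proof -
          have e: "lam^n*B + B*(\<Sum>i<n. lam^i) = B*(\<Sum>i<Suc n. lam^i)" by (simp add: algebra_simps)
          have "ennreal (lam^n*B) + ennreal (B*(\<Sum>i<n. lam^i)) = ennreal (B*(\<Sum>i<Suc n. lam^i))"
            unfolding e[symmetric] using sn B lam by (intro ennreal_plus[symmetric]) auto
          then show ?thesis by (simp only: add.assoc)
        qed
        finally show ?case .
      qed
    qed
    have geo: "\<And>n. B * (\<Sum>i<n. lam^i) \<le> c"
    proof -
      fix n
      have "(\<Sum>i<n. lam^i) = (1 - lam^n) / (1 - lam)" using lam by (simp add: sum_gp_strict)
      also have "\<dots> \<le> 1 / (1 - lam)" using lam by (intro divide_right_mono) auto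
      finally have "B * (\<Sum>i<n. lam^i) \<le> B * (1 / (1 - lam))" using B by (rule mult_left_mono)
      then show "B * (\<Sum>i<n. lam^i) \<le> c" unfolding c_def by simp
    qed
    have all: "\<And>n. G 0 \<le> G n + ennreal c"
      using ind geo order_trans add_left_mono ennreal_leI by metis
    have "G 0 \<le> (INF n. G n + ennreal c)" by (rule INF_greatest) (rule all)
    also have "\<dots> = (INF n. G n) + ennreal c" by (rule INF_ennreal_add_const)
    also have "(INF n. G n) = 0"
    proof -
      have dec: "decseq (\<lambda>n. f n r)"
      proof (rule decseq_SucI, rule le_funI)
        fix n :: nat and y

        show "f (Suc n) r y \<le> f n r y"
        proof (cases "U y \<ge> 0")
          case True
          then have "lam^(Suc n) * U y \<le> lam^n * U y" using lam
            by (intro mult_right_mono power_decreasing) auto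
          then show ?thesis unfolding f_def by (intro ennreal_leI min.mono) simp_all
        next
          case False
          then have "min (lam^(Suc n) * U y) r \<le> 0" using lam
            by (simp add: mult_nonneg_nonpos min.coboundedI1)
          then show ?thesis unfolding f_def by (simp add: ennreal_neg)
        qed
      qed
      have fin: "(\<integral>\<^sup>+w. f 0 r w \<partial>\<mu>) < \<infinity>"
      proof -
        have "(\<integral>\<^sup>+w. f 0 r w \<partial>\<mu>) \<le> (\<integral>\<^sup>+w. ennreal r \<partial>\<mu>)"
          unfolding f_def by (intro nn_integral_mono ennreal_leI) simp
        also have "\<dots> = ennreal r" by (simp add: emeasure_space_1)
        finally show ?thesis by (simp add: le_less_trans)
      qed
      have "(INF n. G n) = (\<integral>\<^sup>+w. (INF n. f n r w) \<partial>\<mu>)"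
        unfolding G_def
        by (rule nn_integral_monotone_convergence_INF_decseq[symmetric, OF dec])
           (use fin in \<open>auto simp: less_top\<close>)
      also have "\<dots> = (\<integral>\<^sup>+w. 0 \<partial>\<mu>)"
      proof (intro nn_integral_cong antisym)
        fix w
        have "(INF n. f n r w) \<le> (INF n. ennreal (lam^n * U w))"
          unfolding f_def by (intro INF_mono' ennreal_leI min.cobounded1)
        then show "(INF n. f n r w) \<le> 0" using INF_pow_zero[of lam "U w"] lam by simp
      qed simp
      finally show ?thesis by simp
    qed
    finally show "(\<integral>\<^sup>+w. f 0 r w \<partial>\<mu>) \<le> ennreal c" unfolding G_def by simp
  qed
  have inc: "incseq (\<lambda>m w. f 0 (real m) w)"
    unfolding f_def by (auto simp: incseq_def le_fun_def intro!: ennreal_leI)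
  have sup: "\<And>w. (SUP m. f 0 (real m) w) = ennreal (U w)"
  proof (rule antisym)
    fix w
    show "(SUP m. f 0 (real m) w) \<le> ennreal (U w)"
      unfolding f_def by (intro SUP_least ennreal_leI) simp
    show "ennreal (U w) \<le> (SUP m. f 0 (real m) w)"
    proof (cases "U w \<ge> 0")
      case True
      have "f 0 (real (nat \<lceil>U w\<rceil>)) w = ennreal (U w)"
        unfolding f_def using True by (simp add: min_def)
      then show ?thesis by (metis SUP_upper UNIV_I)
    next
      case False then show ?thesis by (simp add: ennreal_neg)
    qed
  qed
  have "(\<integral>\<^sup>+w. ennreal (U w) \<partial>\<mu>) = (\<integral>\<^sup>+w. (SUP m. f 0 (real m) w) \<partial>\<mu>)" unfolding sup ..
  also have "\<dots> = (SUP m. \<integral>\<^sup>+w. f 0 (real m) w \<partial>\<mu>)"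
    by (rule nn_integral_monotone_convergence_SUP[OF inc]) measurable
  also have "\<dots> \<le> ennreal c" by (rule SUP_least) (rule G0, simp)
  finally show ?thesis unfolding c_def .
qed

lemma sinh_mvt:
  fixes x y :: real
  assumes "0 \<le> x" "x \<le> y"
  shows "(y - x) * cosh x \<le> sinh y - sinh x" "sinh y - sinh x \<le> (y - x) * cosh y"
proof -
  have "(y - x) * cosh x \<le> sinh y - sinh x \<and> sinh y - sinh x \<le> (y - x) * cosh y"
  proof (cases "x = y")
    case True then show ?thesis by simp
  next
    case False
    then have xy: "x < y" using assms by simp
    have d: "\<And>u::real. (sinh has_real_derivative cosh u) (at u)"
      using has_field_derivative_sinh[of "\<lambda>u. u" 1] by simp
    obtain z where z: "x < z" "z < y" "sinh y - sinh x = (y - x) * cosh z"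
      using MVT2[OF xy, of sinh cosh] d by blast
    have "cosh x \<le> cosh z" "cosh z \<le> cosh y"
      using z assms by (simp_all add: cosh_real_nonneg_le_iff)
    then show ?thesis using z xy by (auto intro: mult_left_mono)
  qed
  then show "(y - x) * cosh x \<le> sinh y - sinh x" "sinh y - sinh x \<le> (y - x) * cosh y" by auto
qed

lemma sinh_le_tcosh: "0 \<le> (t::real) \<Longrightarrow> sinh t \<le> t * cosh t"
  using sinh_mvt(2)[of 0 t] by simp

lemma t_le_sinh: "0 \<le> (t::real) \<Longrightarrow> t \<le> sinh t"
  using sinh_mvt(1)[of 0 t] cosh_real_ge_1[of 0] by simp

lemma exp_sinh_shift:
  fixes t e :: real
  assumes "0 \<le> t" "0 \<le> e"
  shows "exp e * sinh t \<le> sinh (t + e)"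
proof -
  have "sinh (t + e) = sinh t * cosh e + cosh t * sinh e" by (rule sinh_add)
  also have "\<dots> \<ge> sinh t * cosh e + sinh t * sinh e"
    using assms sinh_le_cosh_real[of t] by (intro add_left_mono mult_right_mono) auto
  also have "sinh t * cosh e + sinh t * sinh e = exp e * sinh t"
  proof -
    have "sinh t * cosh e + sinh t * sinh e = sinh t * (cosh e + sinh e)" by (rule distrib_left[symmetric])
    also have "\<dots> = exp e * sinh t" unfolding cosh_plus_sinh by (rule mult.commute)
    finally show ?thesis .
  qed
  finally show ?thesis .
qed

lemma sinh_scale:
  fixes q t :: real
  assumes "0 \<le> q" "q \<le> 1" "0 \<le> t"
  shows "sinh (q * t) \<le> q * sinh t"
proof -
  have qt: "0 \<le> q * t" "q * t \<le> t" using assms by (auto simp: mult_left_le_one_le)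
  have 1: "(t - q * t) * cosh (q * t) \<le> sinh t - sinh (q * t)" using sinh_mvt(1)[OF qt] .
  have 2: "sinh (q * t) \<le> q * t * cosh (q * t)" using sinh_le_tcosh[OF qt(1)] .
  have "(1 - q) * sinh (q * t) \<le> (1 - q) * (q * t * cosh (q * t))"
    using 2 assms by (intro mult_left_mono) auto
  also have "\<dots> = q * ((t - q * t) * cosh (q * t))" by (simp add: algebra_simps)
  also have "\<dots> \<le> q * (sinh t - sinh (q * t))" using 1 assms by (intro mult_left_mono) auto
  finally show ?thesis by (simp add: algebra_simps)
qed

lemma exp_le_1_2: "0 \<le> (e::real) \<Longrightarrow> e \<le> 1/2 \<Longrightarrow> exp e \<le> 1 + 2 * e"
  using exp_bound_lemma[of e] by simp

lemma exp_minus_one_le_sinh: "0 \<le> (x::real) \<Longrightarrow> exp x - 1 \<le> 2 * sinh x"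
  unfolding sinh_def by (simp add: field_simps)

lemma key_sq:
  fixes g L :: real
  assumes g: "g > 0" and L: "L \<ge> 0" and gl: "g * (L + 1) \<le> 1/2"
  shows "1 + g * L \<le> (1 - g/4) * sqrt (1 + 4 * g * (L + 1))"
proof -
  define p where "p = g * L"
  have p0: "p \<ge> 0" unfolding p_def using g L by simp
  have pq: "p + g \<le> 1/2" unfolding p_def using gl by (simp add: algebra_simps)
  have pp: "p * p \<le> p / 2" using p0 pq g by (intro order_trans[OF mult_left_mono[of p "1/2" p]]) auto
  have pg: "p * g \<le> g / 2" using p0 pq g by (intro order_trans[OF mult_right_mono[of p "1/2" g]]) auto
  have gg: "g * g \<le> g / 2" using p0 pq g by (intro order_trans[OF mult_right_mono[of g "1/2" g]]) auto
  have c1: "0 \<le> g*g*g" "0 \<le> p*g*g" using g p0 by simp_all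
  have ex: "(1 - g/4)^2 * (1 + 4 * g + 4 * p) - (1 + p)^2
      = 2*p + 7/2*g - p*p - 2*(p*g) - 31/16*(g*g) + (g*g*g)/4 + (p*g*g)/4"
    by (simp add: power2_eq_square algebra_simps)
  have "(1 + p)^2 \<le> (1 - g/4)^2 * (1 + 4 * g + 4 * p)"
    using ex pp pg gg c1 p0 g by linarith
  also have "1 + 4 * g + 4 * p = 1 + 4 * g * (L + 1)" unfolding p_def by (simp add: algebra_simps)
  finally have "(1 + g * L)^2 \<le> ((1 - g/4) * sqrt (1 + 4 * g * (L + 1)))^2"
    unfolding p_def using g L by (simp add: power_mult_distrib)
  then show ?thesis
  proof (rule power2_le_imp_le)
    have "g \<le> g * (L + 1)" using g L by (simp add: algebra_simps)
    then have "g \<le> 1/2" using gl by simp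
    then show "0 \<le> (1 - g/4) * sqrt (1 + 4 * g * (L + 1))" using g L by (intro mult_nonneg_nonneg) auto
  qed
qed

lemma T1_bound:
  fixes g L c ell w tau :: real
  assumes g: "g > 0" and L: "L \<ge> 0" and gl: "g * (L + 1) \<le> 1/2" and c: "c \<ge> 0"
    and ell: "ell > 0" and w: "w \<ge> 0" and t0: "0 \<le> tau" and tL: "tau \<le> (1 + g * L) * w"
  shows "U1 ((tau + g * c) / ell / sqrt (1 + 4 * g * (L + 1)))
     \<le> U1 (w / ell) - (g/4) * (w / ell) * psi (w / ell) + g * c / ell"
proof -
  define D where "D = sqrt (1 + 4 * g * (L + 1))"
  have D1: "D \<ge> 1" unfolding D_def using g L by simp
  have key: "1 + g * L \<le> (1 - g/4) * D" unfolding D_def by (rule key_sq[OF g L gl])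
  have g12: "g \<le> 1/2"
  proof -
    have "g \<le> g * (L + 1)" using g L by (simp add: algebra_simps)
    then show ?thesis using gl by simp
  qed
  have a1: "tau / (ell * D) \<le> (1 - g/4) * (w / ell)"
  proof -
    have "tau \<le> (1 + g * L) * w" by (rule tL)
    also have "\<dots> \<le> (1 - g/4) * D * w" using key w by (rule mult_right_mono)
    finally have "tau / (ell * D) \<le> (1 - g/4) * D * w / (ell * D)"
      using ell D1 by (intro divide_right_mono) auto
    also have "\<dots> = (1 - g/4) * (w / ell)" using D1 ell by (simp add: field_simps)
    finally show ?thesis .
  qed
  have a2: "g * c / (ell * D) \<le> g * c / ell"
    using g c ell D1 by (intro divide_left_mono) (auto intro!: mult_pos_pos)
  have arg: "(tau + g * c) / ell / D \<le> (1 - g/4) * (w / ell) + g * c / ell"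
    using a1 a2 by (simp add: add_divide_distrib divide_divide_eq_left)
  have "U1 ((tau + g * c) / ell / D) \<le> U1 ((1 - g/4) * (w / ell) + g * c / ell)"
    by (rule U1_mono[OF arg])
  also have "\<dots> \<le> U1 ((1 - g/4) * (w / ell)) + g * c / ell"
    using U1_lip[of "(1 - g/4) * (w / ell)" "(1 - g/4) * (w / ell) + g * c / ell"] g c ell by simp
  also have "U1 ((1 - g/4) * (w / ell)) \<le> U1 (w / ell) - (1 - (1 - g/4)) * (w / ell) * psi (w / ell)"
    using U1_gain[of "w / ell" "1 - g/4"] w ell g g12 by simp
  finally show ?thesis unfolding D_def by simp
qed

lemma T2_small:
  fixes g L c a sg w tau R :: real
  assumes g: "g > 0" and L: "L \<ge> 0" and gL: "g * L \<le> 1" and g1: "g \<le> 1" and gc: "g * c \<le> 1" and c: "c \<ge> 0"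
    and a: "a > 0" and eta: "2 * a^2 * sg^2 * g \<le> 1/2"
    and w: "w \<ge> 0" "w \<le> R" and t0: "0 \<le> tau" and tL: "tau \<le> (1 + g * L) * w"
  shows "exp (2 * a^2 * (sg^2 * g)) * sinh (a * (tau + g * c))
     \<le> sinh (a * w) + g * (cosh (a * (2 * R + 1)) * a * (L + 8 * a^2 * sg^2) * w
                            + cosh (a * (2 * R + 1)) * a * (1 + 4 * a^2 * sg^2) * c)"
proof -
  define CR where "CR = cosh (a * (2 * R + 1))"
  define xb where "xb = (1 + g * L) * w + g * c"
  define E where "E = exp (2 * a^2 * (sg^2 * g))"
  have xb_w: "w \<le> xb" unfolding xb_def using g L w c by (simp add: algebra_simps)
  have xb_R: "xb \<le> 2 * R + 1"
  proof -
    have "g * L * w \<le> 1 * R" using gL w g L by (intro mult_mono) auto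
    then show ?thesis unfolding xb_def using w gc by (simp add: algebra_simps)
  qed
  have xb_2: "xb \<le> 2 * w + c"
  proof -
    have "g * L * w \<le> 1 * w" using gL w by (intro mult_right_mono) auto
    moreover have "g * c \<le> 1 * c" using g1 c by (intro mult_right_mono) auto
    ultimately show ?thesis unfolding xb_def by (simp add: algebra_simps)
  qed
  have x_le: "tau + g * c \<le> xb" unfolding xb_def using tL by simp
  have x0: "0 \<le> tau + g * c" using t0 g c by simp
  have cosh_le: "cosh (a * xb) \<le> CR"
    unfolding CR_def using xb_R a xb_w w by (subst cosh_real_nonneg_le_iff) (auto intro!: mult_left_mono)
  have s1: "sinh (a * (tau + g * c)) \<le> sinh (a * xb)" using x_le a by (simp add: mult_left_mono)
  have s0: "0 \<le> sinh (a * (tau + g * c))" using x0 a by simp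
  have s2: "sinh (a * xb) - sinh (a * w) \<le> (a * xb - a * w) * cosh (a * xb)"
    using sinh_mvt(2)[of "a * w" "a * xb"] a w xb_w by (simp add: mult_left_mono)
  have s3: "(a * xb - a * w) * cosh (a * xb) \<le> a * g * (L * w + c) * CR"
  proof -
    have "a * xb - a * w = a * g * (L * w + c)" unfolding xb_def by (simp add: algebra_simps)
    moreover have "0 \<le> a * g * (L * w + c)" using a g L w c by simp
    ultimately show ?thesis using cosh_le by (simp add: mult_left_mono)
  qed
  have s4: "sinh (a * xb) \<le> a * (2 * w + c) * CR"
  proof -
    have "sinh (a * xb) \<le> a * xb * cosh (a * xb)" using sinh_le_tcosh[of "a * xb"] a xb_w w by simp
    also have "\<dots> \<le> a * (2 * w + c) * CR"
      using xb_2 cosh_le a xb_w w by (intro mult_mono) auto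
    finally show ?thesis .
  qed
  have e1: "E \<le> 1 + 2 * (2 * a^2 * (sg^2 * g))"
    unfolding E_def using eta g by (intro exp_le_1_2) (auto simp: algebra_simps)
  have "E * sinh (a * (tau + g * c)) \<le> (1 + 4 * a^2 * sg^2 * g) * sinh (a * xb)"
    using e1 s1 s0 g by (intro mult_mono) (auto simp: algebra_simps E_def)
  also have "\<dots> = sinh (a * xb) + 4 * a^2 * sg^2 * g * sinh (a * xb)" by (simp add: algebra_simps)
  also have "\<dots> \<le> (sinh (a * w) + a * g * (L * w + c) * CR) + 4 * a^2 * sg^2 * g * (a * (2 * w + c) * CR)"
    using s2 s3 s4 g by (intro add_mono mult_left_mono) auto
  also have "\<dots> = sinh (a * w) + g * (CR * a * (L + 8 * a^2 * sg^2) * w + CR * a * (1 + 4 * a^2 * sg^2) * c)"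
    by (simp add: algebra_simps power2_eq_square)
  finally show ?thesis unfolding E_def CR_def .
qed

lemma T2_large:
  fixes g m c a sg w tau :: real
  assumes g: "g > 0" and gm: "g * m \<le> 1" and m: "m > 0" and c: "c \<ge> 0" and a: "a > 0"
    and w: "w \<ge> 0" and big: "2 * (c + 2 * a * sg^2) \<le> m * w"
    and t0: "0 \<le> tau" and tm: "tau \<le> (1 - g * m) * w"
  shows "exp (2 * a^2 * (sg^2 * g)) * sinh (a * (tau + g * c)) \<le> (1 - g * m / 2) * sinh (a * w)"
proof -
  have x0: "0 \<le> a * (tau + g * c)" using a t0 g c by simp
  have "exp (2 * a^2 * (sg^2 * g)) * sinh (a * (tau + g * c)) \<le> sinh (a * (tau + g * c) + 2 * a^2 * (sg^2 * g))"
    by (rule exp_sinh_shift[OF x0]) (use a g in simp)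
  also have "\<dots> \<le> sinh ((1 - g * m / 2) * (a * w))"
  proof -
    have "a * (tau + g * c) + 2 * a^2 * (sg^2 * g) = a * (tau + g * (c + 2 * a * sg^2))"
      by (simp add: algebra_simps power2_eq_square)
    also have "\<dots> \<le> a * ((1 - g * m) * w + g * (m * w / 2))"
    proof -
      have "g * (c + 2 * a * sg^2) \<le> g * (m * w / 2)" using big g by (intro mult_left_mono) auto
      then show ?thesis using tm a by (intro mult_left_mono) auto
    qed
    also have "\<dots> = (1 - g * m / 2) * (a * w)" by (simp add: algebra_simps)
    finally show ?thesis by simp
  qed
  also have "\<dots> \<le> (1 - g * m / 2) * sinh (a * w)"
    using gm g m a w by (intro sinh_scale) auto
  finally show ?thesis .
qed

lemma drift_real:
  fixes g sg L m c a R ell CR D1 D2 g0 A kap C w tau :: real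
  assumes g: "g > 0" and gl: "g * (L + 1) \<le> 1/2" and gc: "g * c \<le> 1"
    and eta: "2 * a^2 * sg^2 * g \<le> 1/2" and gm: "g * m \<le> 1"
    and sg: "sg > 0" and L: "L \<ge> 0" and m: "m > 0" and c: "c \<ge> 0" and a: "a > 0"
    and R: "R \<ge> 0" and Rbig: "2 * (c + 2 * a * sg^2) \<le> m * R"
    and ell_def: "ell = sg / sqrt (L + 1)"
    and CR_def: "CR = cosh (a * (2 * R + 1))"
    and D1_def: "D1 = CR * a * (L + 8 * a^2 * sg^2)"
    and D2_def: "D2 = CR * a * (1 + 4 * a^2 * sg^2)"
    and g0_def: "g0 = psi (R / ell) / (4 * ell)"
    and A_def: "A = g0 / (2 * D1)"
    and kap_def: "kap = min (m / 4) (min (A * m * a * ell / 4) (g0 / (2 * (1 / ell + A * a * CR))))"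
    and C_def: "C = 1 / ell + A * D2"
    and w: "w \<ge> 0" and t0: "0 \<le> tau" and tL: "tau \<le> (1 + g * L) * w"
    and tm: "w > R \<Longrightarrow> tau \<le> (1 - g * m) * w"
  shows "U1 ((tau + g * c) / ell / sqrt (1 + 4 * g * (L + 1))) + A * (exp (2 * a^2 * (sg^2 * g)) * sinh (a * (tau + g * c)))
     \<le> (1 - kap * g) * (U1 (w / ell) + A * sinh (a * w)) + g * c * C"
proof -
  have ell: "ell > 0" unfolding ell_def using sg L by simp
  have CR1: "CR \<ge> 1" unfolding CR_def by (rule cosh_real_ge_1)
  have D1p: "D1 > 0" unfolding D1_def using CR1 a L sg by (intro mult_pos_pos add_nonneg_pos) auto
  have D2p: "D2 \<ge> 0" unfolding D2_def using CR1 a by simp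
  have g0p: "g0 > 0" unfolding g0_def using ell psi_pos by simp
  have Ap: "A > 0" unfolding A_def using g0p D1p by simp
  have kap_m: "kap \<le> m / 4" unfolding kap_def by (rule min.cobounded1)
  have kap_A: "kap \<le> A * m * a * ell / 4" unfolding kap_def
    by (meson min.cobounded1 min.cobounded2 order_trans)
  have kap_g: "kap \<le> g0 / (2 * (1 / ell + A * a * CR))" unfolding kap_def
    by (meson min.cobounded2 order_trans)
  have kap0: "kap > 0" unfolding kap_def using m Ap a ell g0p CR1 by (auto intro!: divide_pos_pos add_pos_pos mult_pos_pos)
  have gL: "g * L \<le> 1" and g1: "g \<le> 1"
  proof -
    have "g * L \<le> g * (L + 1)" "g \<le> g * (L + 1)" using g L by (simp_all add: algebra_simps)
    then show "g * L \<le> 1" "g \<le> 1" using gl by simp_all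
  qed
  have T1: "U1 ((tau + g * c) / ell / sqrt (1 + 4 * g * (L + 1)))
     \<le> U1 (w / ell) - (g/4) * (w / ell) * psi (w / ell) + g * c / ell"
    by (rule T1_bound[OF g L gl c ell w t0 tL])
  have gain0: "0 \<le> (g/4) * (w / ell) * psi (w / ell)" using g w ell psi_pos[of "w/ell"] by simp
  have U1le: "U1 (w / ell) \<le> w / ell" using U1_le[of "w/ell"] w ell by simp
  have U1nn: "0 \<le> U1 (w / ell)" using U1_nonneg[of "w/ell"] w ell by simp
  have sh0: "0 \<le> sinh (a * w)" using a w by simp
  have Cge: "1 / ell \<le> C" unfolding C_def using Ap D2p by simp
  have gcC: "g * c / ell \<le> g * c * C"
  proof -
    have "g * c * (1 / ell) \<le> g * c * C" using Cge g c by (intro mult_left_mono) auto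
    then show ?thesis by simp
  qed
  show ?thesis
  proof (cases "w \<le> R")
    case True
    have T2: "exp (2 * a^2 * (sg^2 * g)) * sinh (a * (tau + g * c)) \<le> sinh (a * w) + g * (D1 * w + D2 * c)"
      unfolding D1_def D2_def CR_def
      by (rule T2_small[OF g L gL g1 gc c a eta w True t0 tL])
    have p0: "psi (R / ell) \<le> psi (w / ell)"
      using True w ell by (intro psi_mono_abs) (auto simp: divide_right_mono)
    have gain: "g * g0 * w \<le> (g/4) * (w / ell) * psi (w / ell)"
    proof -
      have "g * g0 * w = (g/4) * (w / ell) * psi (R / ell)" unfolding g0_def using ell by (simp add: field_simps)
      also have "\<dots> \<le> (g/4) * (w / ell) * psi (w / ell)" using p0 g w ell by (intro mult_left_mono) auto
      finally show ?thesis .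
    qed
    have AD1: "A * D1 = g0 / 2" unfolding A_def using D1p by simp
    have Ubound: "U1 (w / ell) + A * sinh (a * w) \<le> w * (1 / ell + A * a * CR)"
    proof -
      have "sinh (a * w) \<le> a * w * cosh (a * w)" using sinh_le_tcosh[of "a*w"] a w by simp
      also have "\<dots> \<le> a * w * CR"
        unfolding CR_def using a w True by (intro mult_left_mono) (auto simp: cosh_real_nonneg_le_iff)
      finally have "A * sinh (a * w) \<le> A * (a * w * CR)" using Ap by (intro mult_left_mono) auto
      then show ?thesis using U1le by (simp add: algebra_simps)
    qed
    have kU: "kap * (U1 (w / ell) + A * sinh (a * w)) \<le> g0 / 2 * w"
    proof -
      have pos: "0 < 1 / ell + A * a * CR" using ell Ap a CR1 by (intro add_pos_nonneg) auto
      have "kap * (U1 (w / ell) + A * sinh (a * w)) \<le> kap * (w * (1 / ell + A * a * CR))"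
        using Ubound kap0 by (intro mult_left_mono) auto
      also have "\<dots> \<le> g0 / (2 * (1 / ell + A * a * CR)) * (w * (1 / ell + A * a * CR))"
        using kap_g w pos by (intro mult_right_mono) auto
      also have "\<dots> = g0 / 2 * w" using pos by (simp add: field_simps)
      finally show ?thesis .
    qed
    have "U1 ((tau + g * c) / ell / sqrt (1 + 4 * g * (L + 1))) + A * (exp (2 * a^2 * (sg^2 * g)) * sinh (a * (tau + g * c)))
       \<le> (U1 (w / ell) - g * g0 * w + g * c / ell) + A * (sinh (a * w) + g * (D1 * w + D2 * c))"
      using T1 gain T2 Ap by (intro add_mono mult_left_mono) auto
    also have "\<dots> = (U1 (w / ell) + A * sinh (a * w)) - g * (g0 / 2 * w) + g * c * (1 / ell + A * D2)"
      using AD1 by (simp add: algebra_simps)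
    also have "\<dots> \<le> (U1 (w / ell) + A * sinh (a * w)) - g * (kap * (U1 (w / ell) + A * sinh (a * w))) + g * c * C"
      unfolding C_def using mult_left_mono[OF kU, of g] g by linarith
    also have "\<dots> = (1 - kap * g) * (U1 (w / ell) + A * sinh (a * w)) + g * c * C" by (simp add: algebra_simps)
    finally show ?thesis .
  next
    case False
    then have wR: "w > R" by simp
    have big: "2 * (c + 2 * a * sg^2) \<le> m * w" using Rbig wR m by (smt (verit) mult_left_mono)
    have T2: "exp (2 * a^2 * (sg^2 * g)) * sinh (a * (tau + g * c)) \<le> (1 - g * m / 2) * sinh (a * w)"
      by (rule T2_large[OF g gm m c a w big t0 tm[OF wR]])
    have sh_lb: "w / ell \<le> sinh (a * w) / (a * ell)"
    proof -
      have "a * w \<le> sinh (a * w)" using t_le_sinh[of "a*w"] a w by simp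
      then show ?thesis using a ell by (simp add: field_simps)
    qed
    have k1: "kap * U1 (w / ell) \<le> A * m / 4 * sinh (a * w)"
    proof -
      have "kap * U1 (w / ell) \<le> kap * (sinh (a * w) / (a * ell))"
        using U1le sh_lb kap0 by (intro mult_left_mono) auto
      also have "\<dots> \<le> (A * m * a * ell / 4) * (sinh (a * w) / (a * ell))"
        using kap_A sh0 a ell by (intro mult_right_mono) auto
      also have "\<dots> = A * m / 4 * sinh (a * w)" using a ell by (simp add: field_simps)
      finally show ?thesis .
    qed
    have k2: "kap * (A * sinh (a * w)) \<le> m / 4 * (A * sinh (a * w))"
      using kap_m Ap sh0 by (intro mult_right_mono) auto
    have "U1 ((tau + g * c) / ell / sqrt (1 + 4 * g * (L + 1))) + A * (exp (2 * a^2 * (sg^2 * g)) * sinh (a * (tau + g * c)))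
       \<le> (U1 (w / ell) + g * c / ell) + A * ((1 - g * m / 2) * sinh (a * w))"
      using T1 gain0 T2 Ap by (intro add_mono mult_left_mono) auto
    also have "\<dots> = (U1 (w / ell) + A * sinh (a * w)) - g * (A * m / 2 * sinh (a * w)) + g * c / ell"
      by (simp add: algebra_simps)
    also have "\<dots> \<le> (U1 (w / ell) + A * sinh (a * w)) - g * (kap * (U1 (w / ell) + A * sinh (a * w))) + g * c * C"
    proof -
      have "kap * (U1 (w / ell) + A * sinh (a * w)) \<le> A * m / 2 * sinh (a * w)"
        using k1 k2 by (simp add: algebra_simps)
      then have "g * (kap * (U1 (w / ell) + A * sinh (a * w))) \<le> g * (A * m / 2 * sinh (a * w))"
        using g by (intro mult_left_mono) auto
      then show ?thesis using gcC by linarith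
    qed
    also have "\<dots> = (1 - kap * g) * (U1 (w / ell) + A * sinh (a * w)) + g * c * C" by (simp add: algebra_simps)
    finally show ?thesis .
  qed
qed

lemma Qker_eq:
  assumes sg: "\<sigma> > 0" and g: "\<gamma> > 0"
  shows "Qker \<sigma> cinf T \<gamma> w A =
     indicator A 0 * (\<integral>g. pbar (\<sigma>^2 * \<gamma>) (T \<gamma> w + \<gamma> * cinf) g * phi g \<partial>lborel)
   + (\<integral>g. indicator A (T \<gamma> w + \<gamma> * cinf - 2 * sqrt (\<sigma>^2 * \<gamma>) * g) * (1 - pbar (\<sigma>^2 * \<gamma>) (T \<gamma> w + \<gamma> * cinf) g) * phi g \<partial>lborel)"
proof -
  have "sqrt (\<sigma>^2 * \<gamma>) = \<sigma> * sqrt \<gamma>" using sg g by (simp add: real_sqrt_mult)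
  then have e: "\<And>g. 2 * sqrt (\<sigma>^2 * \<gamma>) * g = 2 * \<sigma> * sqrt \<gamma> * g" by simp
  show ?thesis unfolding Qker_def e ..
qed

lemma fixed_gamma:
  fixes \<sigma> cinf R1 L m a \<gamma> R ell CR D1 D2 g0 A kap C :: real
    and T :: "real \<Rightarrow> real \<Rightarrow> real" and \<mu> :: "real measure"
  assumes sg: "\<sigma> > 0" and c: "cinf \<ge> 0" and R1: "R1 \<ge> 0" and L: "L \<ge> 0" and m: "m > 0"
    and a: "a > 0" and g: "\<gamma> > 0"
    and gl: "\<gamma> * (L + 1) \<le> 1/2" and gc: "\<gamma> * cinf \<le> 1"
    and eta: "2 * a^2 * \<sigma>^2 * \<gamma> \<le> 1/2" and gm: "\<gamma> * m \<le> 1"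
    and RR1: "R1 \<le> R" and Rbig: "2 * (cinf + 2 * a * \<sigma>^2) \<le> m * R"
    and ell_def: "ell = \<sigma> / sqrt (L + 1)"
    and CR_def: "CR = cosh (a * (2 * R + 1))"
    and D1_def: "D1 = CR * a * (L + 8 * a^2 * \<sigma>^2)"
    and D2_def: "D2 = CR * a * (1 + 4 * a^2 * \<sigma>^2)"
    and g0_def: "g0 = psi (R / ell) / (4 * ell)"
    and A_def: "A = g0 / (2 * D1)"
    and kap_def: "kap = min (m / 4) (min (A * m * a * ell / 4) (g0 / (2 * (1 / ell + A * a * CR))))"
    and C_def: "C = 1 / ell + A * D2"
    and tnn: "\<And>r. r \<ge> 0 \<Longrightarrow> T \<gamma> r \<ge> 0"
    and tmono: "mono_on {0..} (T \<gamma>)"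
    and t0: "T \<gamma> 0 = 0"
    and tL: "\<forall>r>0. T \<gamma> r / r \<le> 1 + \<gamma> * L"
    and tm: "\<forall>r>R1. T \<gamma> r / r \<le> 1 - \<gamma> * m"
    and sets: "sets \<mu> = sets borel" and P: "prob_space \<mu>" and supp: "emeasure \<mu> {0..} = 1"
    and inv: "\<And>A. A \<in> sets borel \<Longrightarrow> emeasure \<mu> A = (\<integral>\<^sup>+ w. ennreal (Qker \<sigma> cinf T \<gamma> w A) \<partial>\<mu>)"
  shows "(\<integral>\<^sup>+ w. ennreal (exp (a * w) - 1) \<partial>\<mu>) \<le> ennreal (cinf * (2 * C / (A * kap)))"
proof -
  interpret prob_space \<mu> by (rule P)
  note [measurable_cong] = sets
  define s where "s = \<sigma>^2 * \<gamma>"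
  have s: "s > 0" unfolding s_def using sg g by simp
  define X where "X w = T \<gamma> (max 0 w) + \<gamma> * cinf" for w
  have monoX: "mono (\<lambda>w. T \<gamma> (max 0 w))"
    using tmono by (auto simp: mono_def mono_on_def max_def)
  have Xm[measurable]: "X \<in> borel_measurable borel"
  proof -
    have "(\<lambda>w. T \<gamma> (max 0 w)) \<in> borel_measurable borel" by (rule borel_measurable_mono[OF monoX])
    then show ?thesis unfolding X_def[abs_def] by measurable
  qed
  have AEpos: "AE w in \<mu>. w \<ge> 0"
  proof -
    have "prob {0..} = 1" using supp by (simp add: emeasure_eq_measure)
    then have "AE w in \<mu>. w \<in> {0..}" by (rule AE_prob_1)
    then show ?thesis by simp
  qed
  have invK: "\<And>A. A \<in> sets borel \<Longrightarrow> emeasure \<mu> A = (\<integral>\<^sup>+w. Kn s (indicator A) (X w) \<partial>\<mu>)"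
  proof -
    fix A :: "real set" assume A: "A \<in> sets borel"
    have "emeasure \<mu> A = (\<integral>\<^sup>+ w. ennreal (Qker \<sigma> cinf T \<gamma> w A) \<partial>\<mu>)" by (rule inv[OF A])
    also have "\<dots> = (\<integral>\<^sup>+w. Kn s (indicator A) (X w) \<partial>\<mu>)"
    proof (rule nn_integral_cong_AE)
      show "AE w in \<mu>. ennreal (Qker \<sigma> cinf T \<gamma> w A) = Kn s (indicator A) (X w)"
        using AEpos
      proof (rule AE_mp, intro AE_I2 impI)
        fix w :: real assume w: "w \<ge> 0"
        then have Xw: "X w = T \<gamma> w + \<gamma> * cinf" unfolding X_def by simp
        show "ennreal (Qker \<sigma> cinf T \<gamma> w A) = Kn s (indicator A) (X w)"
          unfolding Qker_eq[OF sg g] Xw s_def[symmetric]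
          by (rule K_indicator[OF s A])
      qed
    qed
    finally show "emeasure \<mu> A = (\<integral>\<^sup>+w. Kn s (indicator A) (X w) \<partial>\<mu>)" .
  qed
  have invf: "\<And>f. f \<in> borel_measurable borel \<Longrightarrow> (\<integral>\<^sup>+w. f w \<partial>\<mu>) = (\<integral>\<^sup>+w. Kn s f (X w) \<partial>\<mu>)"
    by (rule inv_ext[OF s sets Xm invK])
  have ell: "ell > 0" unfolding ell_def using sg L by simp
  have ell2: "ell^2 = \<sigma>^2 / (L + 1)" unfolding ell_def using L by (simp add: power_divide)
  have CR1: "CR \<ge> 1" unfolding CR_def by (rule cosh_real_ge_1)
  have D1p: "D1 > 0" unfolding D1_def using CR1 a L sg by (intro mult_pos_pos add_nonneg_pos) auto
  have D2p: "D2 \<ge> 0" unfolding D2_def using CR1 a by simp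
  have g0p: "g0 > 0" unfolding g0_def using ell psi_pos by simp
  have Ap: "A > 0" unfolding A_def using g0p D1p by simp
  have kap0: "kap > 0" unfolding kap_def using m Ap a ell g0p CR1
    by (auto intro!: divide_pos_pos add_pos_pos mult_pos_pos)
  have kap_m: "kap \<le> m / 4" unfolding kap_def by (rule min.cobounded1)
  have C0: "C \<ge> 0" unfolding C_def using ell Ap D2p by simp
  define U where "U w = U1 (w / ell) + A * sinh (a * w)" for w
  have sm[measurable]: "(\<lambda>x::real. sinh (a * x)) \<in> borel_measurable borel"
    by (intro borel_measurable_continuous_onI continuous_intros)
  have Um[measurable]: "U \<in> borel_measurable borel" unfolding U_def[abs_def] by measurable
  have U0: "U 0 = 0" unfolding U_def by (simp add: U1_0)
  have Uodd: "\<And>y. U (-y) = - U y" unfolding U_def by (simp add: U1_odd[of "y / ell" for y, simplified])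
  have Upos: "\<And>w. w \<ge> 0 \<Longrightarrow> U w \<ge> 0"
    unfolding U_def using ell Ap a by (auto intro!: add_nonneg_nonneg U1_nonneg)
  define t where "t = 2 * sqrt s / ell"
  have tsq: "sqrt (1 + t^2) = sqrt (1 + 4 * \<gamma> * (L + 1))"
  proof -
    have "t^2 = 4 * s / ell^2" unfolding t_def using s by (simp add: power_divide power_mult_distrib)
    also have "\<dots> = 4 * \<gamma> * (L + 1)" unfolding ell2 s_def using sg L by (simp add: field_simps)
    finally show ?thesis by simp
  qed
  have Uint: "\<And>xx. (\<integral>g. U (xx - 2 * sqrt s * g) * phi g \<partial>lborel)
        = U1 (xx / ell / sqrt (1 + 4 * \<gamma> * (L + 1))) + A * (exp (2 * a^2 * (\<sigma>^2 * \<gamma>)) * sinh (a * xx))"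
    and Uintg: "\<And>xx. integrable lborel (\<lambda>g. U (xx - 2 * sqrt s * g) * phi g)"
  proof -
    fix xx :: real
    have e1: "\<And>g. (xx - 2 * sqrt s * g) / ell = xx / ell - t * g" unfolding t_def using ell by (simp add: field_simps)
    have i1: "integrable lborel (\<lambda>g. U1 (xx / ell - t * g) * std_normal_density g)" by (rule U1_conv(1))
    have v1: "(\<integral>g. U1 (xx / ell - t * g) * std_normal_density g \<partial>lborel) = U1 (xx / ell / sqrt (1 + 4 * \<gamma> * (L + 1)))"
      using U1_conv(2)[of "xx / ell" t] unfolding tsq .
    have i2: "integrable lborel (\<lambda>g. sinh (a * (xx - 2 * sqrt s * g)) * phi g)" by (rule sinh_conv(1))
    have v2: "(\<integral>g. sinh (a * (xx - 2 * sqrt s * g)) * phi g \<partial>lborel) = exp (2 * a^2 * (\<sigma>^2 * \<gamma>)) * sinh (a * xx)"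
      using sinh_conv(2)[of a xx "sqrt s"] s unfolding s_def by simp
    have eU: "\<And>g. U (xx - 2 * sqrt s * g) * phi g = U1 (xx / ell - t * g) * std_normal_density g + A * (sinh (a * (xx - 2 * sqrt s * g)) * phi g)"
      unfolding U_def e1 phi_std by (simp add: algebra_simps)
    show "integrable lborel (\<lambda>g. U (xx - 2 * sqrt s * g) * phi g)"
      unfolding eU using i1 i2 by auto
    show "(\<integral>g. U (xx - 2 * sqrt s * g) * phi g \<partial>lborel)
        = U1 (xx / ell / sqrt (1 + 4 * \<gamma> * (L + 1))) + A * (exp (2 * a^2 * (\<sigma>^2 * \<gamma>)) * sinh (a * xx))"
      unfolding eU using i1 i2 v1 v2 by simp
  qed
  have drift: "\<And>w. w \<ge> 0 \<Longrightarrow> Kn s (\<lambda>y. ennreal (U y)) (X w) \<le> ennreal ((1 - kap * \<gamma>) * U w + \<gamma> * cinf * C)"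
  proof -
    fix w :: real assume w: "w \<ge> 0"
    have Xw: "X w = T \<gamma> w + \<gamma> * cinf" unfolding X_def using w by simp
    have tau0: "0 \<le> T \<gamma> w" by (rule tnn[OF w])
    have X0: "X w \<ge> 0" unfolding Xw using tau0 g c by simp
    have tauL: "T \<gamma> w \<le> (1 + \<gamma> * L) * w"
    proof (cases "w = 0")
      case True then show ?thesis using t0 by simp
    next
      case False
      then have "w > 0" using w by simp
      then show ?thesis using tL by (auto simp: pos_divide_le_eq)
    qed
    have tauM: "w > R \<Longrightarrow> T \<gamma> w \<le> (1 - \<gamma> * m) * w"
    proof -
      assume "w > R"
      then have "w > R1" "w > 0" using RR1 R1 by auto
      then show "T \<gamma> w \<le> (1 - \<gamma> * m) * w" using tm by (auto simp: pos_divide_le_eq)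
    qed
    have "Kn s (\<lambda>y. ennreal (U y)) (X w) = ennreal (\<integral>g. U (X w - 2 * sqrt s * g) * phi g \<partial>lborel)"
      by (rule K_refl[OF s X0 Uodd Upos Um Uintg])
    also have "\<dots> = ennreal (U1 ((T \<gamma> w + \<gamma> * cinf) / ell / sqrt (1 + 4 * \<gamma> * (L + 1)))
          + A * (exp (2 * a^2 * (\<sigma>^2 * \<gamma>)) * sinh (a * (T \<gamma> w + \<gamma> * cinf))))"
      unfolding Uint Xw ..
    also have "\<dots> \<le> ennreal ((1 - kap * \<gamma>) * U w + \<gamma> * cinf * C)"
      unfolding U_def
      by (intro ennreal_leI drift_real[OF g gl gc eta gm sg L m c a _ Rbig ell_def CR_def D1_def D2_def
            g0_def A_def kap_def C_def w tau0 tauL tauM]) (use R1 RR1 in simp)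
    finally show "Kn s (\<lambda>y. ennreal (U y)) (X w) \<le> ennreal ((1 - kap * \<gamma>) * U w + \<gamma> * cinf * C)" .
  qed
  have lam0: "0 < 1 - kap * \<gamma>"
  proof -
    have "kap * \<gamma> \<le> m / 4 * \<gamma>" using kap_m g by (intro mult_right_mono) auto
    also have "\<dots> \<le> 1/4" using gm by (simp add: algebra_simps)
    finally show ?thesis by simp
  qed
  have lam1: "1 - kap * \<gamma> < 1" using kap0 g by simp
  have B0: "0 \<le> \<gamma> * cinf * C" using g c C0 by simp
  have bound: "(\<integral>\<^sup>+w. ennreal (U w) \<partial>\<mu>) \<le> ennreal (\<gamma> * cinf * C / (1 - (1 - kap * \<gamma>)))"
    by (rule drift_bound[OF s P sets invf AEpos Um U0 drift lam0 lam1 B0 Upos])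
  have bnd: "\<gamma> * cinf * C / (1 - (1 - kap * \<gamma>)) = cinf * C / kap" using g kap0 by (simp add: field_simps)
  have pw: "\<And>w. ennreal (exp (a * w) - 1) \<le> ennreal (2 / A) * ennreal (U w)"
  proof -
    fix w :: real
    show "ennreal (exp (a * w) - 1) \<le> ennreal (2 / A) * ennreal (U w)"
    proof (cases "w \<ge> 0")
      case True
      have "exp (a * w) - 1 \<le> 2 * sinh (a * w)" using exp_minus_one_le_sinh[of "a * w"] a True by simp
      also have "\<dots> \<le> 2 / A * U w"
        unfolding U_def using Ap U1_nonneg[of "w / ell"] True ell by (simp add: field_simps)
      finally have "ennreal (exp (a * w) - 1) \<le> ennreal (2 / A * U w)" by (rule ennreal_leI)
      also have "\<dots> = ennreal (2 / A) * ennreal (U w)" by (rule ennreal_mult') (use Ap in simp)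
      finally show ?thesis .
    next
      case False
      then have "a * w \<le> 0" using a by (intro mult_nonneg_nonpos) auto
      then have "exp (a * w) - 1 \<le> 0" by simp
      then show ?thesis by (simp add: ennreal_neg)
    qed
  qed
  have "(\<integral>\<^sup>+ w. ennreal (exp (a * w) - 1) \<partial>\<mu>) \<le> (\<integral>\<^sup>+ w. ennreal (2 / A) * ennreal (U w) \<partial>\<mu>)"
    by (intro nn_integral_mono pw)
  also have "\<dots> = ennreal (2 / A) * (\<integral>\<^sup>+ w. ennreal (U w) \<partial>\<mu>)"
    by (rule nn_integral_cmult) measurable
  also have "\<dots> \<le> ennreal (2 / A) * ennreal (cinf * C / kap)"
    using bound unfolding bnd by (rule mult_left_mono) simp
  also have "\<dots> = ennreal (cinf * (2 * C / (A * kap)))"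
    using Ap kap0 c C0 by (simp add: ennreal_mult[symmetric] field_simps)
  finally show ?thesis .
qed

theorem theorem12:
  fixes \<sigma> \<gamma>bar cinf R1 L m a :: real
    and \<tau> :: "real \<Rightarrow> real \<Rightarrow> real"
    and \<mu> :: "real \<Rightarrow> real measure"
  assumes "\<sigma> > 0" "\<gamma>bar > 0" "cinf \<ge> 0"
    and "R1 \<ge> 0" "L \<ge> 0" "m > 0"
    and tau_nonneg: "\<And>\<gamma> r. \<gamma> \<in> {0<..\<gamma>bar} \<Longrightarrow> r \<ge> 0 \<Longrightarrow> \<tau> \<gamma> r \<ge> 0"
    and tau_mono: "\<And>\<gamma>. \<gamma> \<in> {0<..\<gamma>bar} \<Longrightarrow> mono_on {0..} (\<tau> \<gamma>)"
    and tau_zero: "\<And>\<gamma>. \<gamma> \<in> {0<..\<gamma>bar} \<Longrightarrow> \<tau> \<gamma> 0 = 0"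
    and tau_L: "\<And>\<gamma>. \<gamma> \<in> {0<..\<gamma>bar} \<Longrightarrow> \<forall>r>0. \<tau> \<gamma> r / r \<le> 1 + \<gamma> * L"
    and tau_m: "\<And>\<gamma>. \<gamma> \<in> {0<..\<gamma>bar} \<Longrightarrow> \<forall>r>R1. \<tau> \<gamma> r / r \<le> 1 - \<gamma> * m"
    and mu_sets: "\<And>\<gamma>. \<gamma> \<in> {0<..\<gamma>bar} \<Longrightarrow> sets (\<mu> \<gamma>) = sets borel"
    and mu_prob: "\<And>\<gamma>. \<gamma> \<in> {0<..\<gamma>bar} \<Longrightarrow> prob_space (\<mu> \<gamma>)"
    and mu_supp: "\<And>\<gamma>. \<gamma> \<in> {0<..\<gamma>bar} \<Longrightarrow> emeasure (\<mu> \<gamma>) {0..} = 1"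
    and mu_inv: "\<And>\<gamma> A. \<gamma> \<in> {0<..\<gamma>bar} \<Longrightarrow> A \<in> sets borel \<Longrightarrow>
        emeasure (\<mu> \<gamma>) A = (\<integral>\<^sup>+ w. ennreal (Qker \<sigma> cinf \<tau> \<gamma> w A) \<partial>\<mu> \<gamma>)"
    and "a > 0"
  shows "\<exists>\<gamma>1 c3. \<gamma>1 \<in> {0<..\<gamma>bar} \<and> c3 \<ge> 0 \<and>
     (\<forall>\<gamma>\<in>{0<..\<gamma>1}. (\<integral>\<^sup>+ w. ennreal (exp (a * w) - 1) \<partial>\<mu> \<gamma>) \<le> ennreal (cinf * c3))"
proof -
  note sg = assms(1) and gb = assms(2) and c = assms(3) and R1 = assms(4) and L = assms(5) and m = assms(6)
    and a = assms(16)
  define ell where "ell = \<sigma> / sqrt (L + 1)"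
  define R where "R = max R1 (2 * (cinf + 2 * a * \<sigma>^2) / m)"
  define CR where "CR = cosh (a * (2 * R + 1))"
  define D1 where "D1 = CR * a * (L + 8 * a^2 * \<sigma>^2)"
  define D2 where "D2 = CR * a * (1 + 4 * a^2 * \<sigma>^2)"
  define g0 where "g0 = psi (R / ell) / (4 * ell)"
  define A where "A = g0 / (2 * D1)"
  define kap where "kap = min (m / 4) (min (A * m * a * ell / 4) (g0 / (2 * (1 / ell + A * a * CR))))"
  define C where "C = 1 / ell + A * D2"
  define g1 where "g1 = min \<gamma>bar (min (1 / (2 * (L + 1))) (min (1 / (cinf + 1)) (min (1 / (4 * a^2 * \<sigma>^2 + 1)) (1 / (m + 1)))))"
  have ell: "ell > 0" unfolding ell_def using sg L by simp
  have CR1: "CR \<ge> 1" unfolding CR_def by (rule cosh_real_ge_1)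
  have D1p: "D1 > 0" unfolding D1_def using CR1 a L sg by (intro mult_pos_pos add_nonneg_pos) auto
  have D2p: "D2 \<ge> 0" unfolding D2_def using CR1 a by simp
  have g0p: "g0 > 0" unfolding g0_def using ell psi_pos by simp
  have Ap: "A > 0" unfolding A_def using g0p D1p by simp
  have kap0: "kap > 0" unfolding kap_def using m Ap a ell g0p CR1
    by (auto intro!: divide_pos_pos add_pos_pos mult_pos_pos)
  have C0: "C \<ge> 0" unfolding C_def using ell Ap D2p by simp
  have g1p: "g1 > 0" unfolding g1_def using gb L c m a sg
    by (auto intro!: divide_pos_pos add_pos_nonneg add_nonneg_pos)
  have g1b: "g1 \<le> \<gamma>bar" unfolding g1_def by simp
  have RR1: "R1 \<le> R" unfolding R_def by simp
  have Rbig: "2 * (cinf + 2 * a * \<sigma>^2) \<le> m * R"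
  proof -
    have "2 * (cinf + 2 * a * \<sigma>^2) / m \<le> R" unfolding R_def by simp
    then show ?thesis using m by (simp add: pos_divide_le_eq mult.commute)
  qed
  have gi: "g1 \<in> {0<..\<gamma>bar}" using g1p g1b by simp
  have c3: "0 \<le> 2 * C / (A * kap)" using C0 Ap kap0 by simp
  have main: "\<forall>\<gamma>\<in>{0<..g1}. (\<integral>\<^sup>+ w. ennreal (exp (a * w) - 1) \<partial>\<mu> \<gamma>) \<le> ennreal (cinf * (2 * C / (A * kap)))"
  proof
    fix \<gamma> assume "\<gamma> \<in> {0<..g1}"
    then have g: "\<gamma> > 0" and gg1: "\<gamma> \<le> g1" by auto
    have gin: "\<gamma> \<in> {0<..\<gamma>bar}" using g gg1 g1b by simp
    have "\<gamma> \<le> 1 / (2 * (L + 1))" using gg1 unfolding g1_def by simp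
    then have gl: "\<gamma> * (L + 1) \<le> 1/2" using L by (simp add: pos_le_divide_eq algebra_simps)
    have "\<gamma> \<le> 1 / (cinf + 1)" using gg1 unfolding g1_def by simp
    then have "\<gamma> * (cinf + 1) \<le> 1" using c by (simp add: pos_le_divide_eq)
    then have gc: "\<gamma> * cinf \<le> 1" using g by (simp add: algebra_simps)
    have "\<gamma> \<le> 1 / (4 * a^2 * \<sigma>^2 + 1)" using gg1 unfolding g1_def by simp
    then have "\<gamma> * (4 * a^2 * \<sigma>^2 + 1) \<le> 1" by (simp add: pos_le_divide_eq add_nonneg_pos)
    then have eta: "2 * a^2 * \<sigma>^2 * \<gamma> \<le> 1/2" using g by (simp add: algebra_simps)
    have "\<gamma> \<le> 1 / (m + 1)" using gg1 unfolding g1_def by simp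
    then have "\<gamma> * (m + 1) \<le> 1" using m by (simp add: pos_le_divide_eq)
    then have gm: "\<gamma> * m \<le> 1" using g by (simp add: algebra_simps)
    show "(\<integral>\<^sup>+ w. ennreal (exp (a * w) - 1) \<partial>\<mu> \<gamma>) \<le> ennreal (cinf * (2 * C / (A * kap)))"
      by (rule fixed_gamma[OF sg c R1 L m a g gl gc eta gm RR1 Rbig ell_def CR_def D1_def D2_def g0_def
            A_def kap_def C_def assms(7)[OF gin] assms(8)[OF gin] assms(9)[OF gin] assms(10)[OF gin]
            assms(11)[OF gin] assms(12)[OF gin] assms(13)[OF gin] assms(14)[OF gin] assms(15)[OF gin]])
  qed
  show ?thesis using gi c3 main by blast
qed

end
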